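(* Let $d\in\mathbb N$, and assume (A1) and (A2). Then $H(M^{{\boldsymbol\eta},m})\subseteq H(M^{{\boldsymbol\eta}^\uparrow,m^\uparrow})$ (both spaces consisting of functions on $D^d$) and the identical embedding has norm at most one.
   Context: For a reproducing kernel $M$ over a set $\mathfrak Z$, $H(M)$ is its RKHS with norm $\|\cdot\|_M$. Write $[d]=\{1,\dots,d\}$, $\mathcal U_d$ the power set of $[d]$, weights $\mathcal W_d$ the families $(\gamma_u)_{u\in\mathcal U_d}$ of non-negative reals. For $C>0$, $T^\uparrow_{d,C}\colon\mathcal W_d\to\mathcal W_d$, $(T^\uparrow_{d,C}{\boldsymbol\gamma})_u=\sum_{v\supseteq u}C^{2|v|}\gamma_v$, and $\mathcal S_{d,C}=\{{\boldsymbol\gamma}\in\mathcal W_d:\sum_vC^{2|v|}\gamma_v<\infty\}$. Given a reproducing kernel $m\ne0$ over a non-empty set $D$ and $u\in\mathcal U_d$, let $m_u(\mathbf x,\mathbf y)=\prod_{j\in u}m(x_j,y_j)$ ($m_\emptyset=1$), and for weights ${\boldsymbol\eta}$ let $M^{{\boldsymbol\eta},m}(\mathbf x,\mathbf y)=\sum_{u\in\mathcal U_d}\eta_u m_u(\mathbf x,\mathbf y)$ for $\mathbf x,\mathbf y\in D^d$. Assumptions: (A1) $m,m^\uparrow$ are nonzero reproducing kernels over $D$ with $H(m)\subseteq H(1+m^\uparrow)$, and $C\ge\sup\{\|f\|_{1+m^\uparrow}:f\in H(m),\|f\|_m\le1\}$, $C>0$. (A2) ${\boldsymbol\eta}\in\mathcal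 S_{d,C}$ and ${\boldsymbol\eta}^\uparrow=T^\uparrow_{d,C}{\boldsymbol\eta}$. *)

theory Defs
  imports Complex_Main "HOL-Library.FuncSet" "HOL-Analysis.Infinite_Sum"
begin

text \<open>Reproducing kernel Hilbert spaces of real-valued functions on a carrier set Z.
  Functions are represented as total functions that vanish outside Z.\<close>

definition ksec :: "'z set \<Rightarrow> ('z \<Rightarrow> 'z \<Rightarrow> real) \<Rightarrow> 'z \<Rightarrow> 'z \<Rightarrow> real" where
  "ksec Z K x = (\<lambda>y. if y \<in> Z then K y x else 0)"

definition is_rkhs :: "'z set \<Rightarrow> ('z \<Rightarrow> 'z \<Rightarrow> real) \<Rightarrow> ('z \<Rightarrow> real) set
     \<Rightarrow> (('z \<Rightarrow> real) \<Rightarrow> ('z \<Rightarrow> real) \<Rightarrow> real) \<Rightarrow> bool" where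
  "is_rkhs Z K V ip \<longleftrightarrow>
     V \<subseteq> {f. \<forall>z. z \<notin> Z \<longrightarrow> f z = 0} \<and>
     (\<lambda>_. 0) \<in> V \<and>
     (\<forall>f\<in>V. \<forall>g\<in>V. (\<lambda>z. f z + g z) \<in> V) \<and>
     (\<forall>f\<in>V. \<forall>a::real. (\<lambda>z. a * f z) \<in> V) \<and>
     (\<forall>f\<in>V. \<forall>g\<in>V. \<forall>h\<in>V. ip (\<lambda>z. f z + g z) h = ip f h + ip g h) \<and>
     (\<forall>f\<in>V. \<forall>g\<in>V. \<forall>a::real. ip (\<lambda>z. a * f z) g = a * ip f g) \<and>
     (\<forall>f\<in>V. \<forall>g\<in>V. ip f g = ip g f) \<and>
     (\<forall>f\<in>V. ip f f \<ge> 0 \<and> (ip f f = 0 \<longrightarrow> f = (\<lambda>_. 0))) \<and>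
     (\<forall>s::nat \<Rightarrow> 'z \<Rightarrow> real. (\<forall>n. s n \<in> V) \<and>
        (\<forall>e>0. \<exists>N. \<forall>m\<ge>N. \<forall>n\<ge>N. ip (\<lambda>z. s m z - s n z) (\<lambda>z. s m z - s n z) < e)
        \<longrightarrow> (\<exists>g\<in>V. (\<lambda>n. ip (\<lambda>z. s n z - g z) (\<lambda>z. s n z - g z)) \<longlonglongrightarrow> 0)) \<and>
     (\<forall>x\<in>Z. ksec Z K x \<in> V \<and> (\<forall>f\<in>V. ip f (ksec Z K x) = f x))"

definition reproducing_kernel :: "'z set \<Rightarrow> ('z \<Rightarrow> 'z \<Rightarrow> real) \<Rightarrow> bool" where
  "reproducing_kernel Z K \<longleftrightarrow> (\<exists>V ip. is_rkhs Z K V ip)"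

definition rkhs :: "'z set \<Rightarrow> ('z \<Rightarrow> 'z \<Rightarrow> real) \<Rightarrow> ('z \<Rightarrow> real) set" where
  "rkhs Z K = (THE V. \<exists>ip. is_rkhs Z K V ip)"

definition rkhs_norm :: "'z set \<Rightarrow> ('z \<Rightarrow> 'z \<Rightarrow> real) \<Rightarrow> ('z \<Rightarrow> real) \<Rightarrow> real" where
  "rkhs_norm Z K f = sqrt ((SOME ip. is_rkhs Z K (rkhs Z K) ip) f f)"

text \<open>D^d as functions on {1..d} (extensional, value undefined elsewhere).\<close>
definition cube :: "'a set \<Rightarrow> nat \<Rightarrow> (nat \<Rightarrow> 'a) set" where
  "cube D d = PiE {1..d} (\<lambda>_. D)"

definition prod_kernel :: "('a \<Rightarrow> 'a \<Rightarrow> real) \<Rightarrow> nat set \<Rightarrow> (nat \<Rightarrow> 'a) \<Rightarrow> (nat \<Rightarrow> 'a) \<Rightarrow> real" where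
  "prod_kernel m u x y = (\<Prod>j\<in>u. m (x j) (y j))"

definition weighted_kernel :: "nat \<Rightarrow> (nat set \<Rightarrow> real) \<Rightarrow> ('a \<Rightarrow> 'a \<Rightarrow> real)
     \<Rightarrow> (nat \<Rightarrow> 'a) \<Rightarrow> (nat \<Rightarrow> 'a) \<Rightarrow> real" where
  "weighted_kernel d \<eta> m x y = (\<Sum>u\<in>Pow {1..d}. \<eta> u * prod_kernel m u x y)"

definition weights :: "nat \<Rightarrow> (nat set \<Rightarrow> real) set" where
  "weights d = {\<gamma>. \<forall>u\<in>Pow {1..d}. \<gamma> u \<ge> 0}"

definition S_set :: "nat \<Rightarrow> real \<Rightarrow> (nat set \<Rightarrow> real) set" where
  "S_set d C = {\<gamma> \<in> weights d. (\<lambda>v. C ^ (2 * card v) * \<gamma> v) summable_on Pow {1..d}}"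

definition T_up :: "nat \<Rightarrow> real \<Rightarrow> (nat set \<Rightarrow> real) \<Rightarrow> nat set \<Rightarrow> real" where
  "T_up d C \<gamma> u = (\<Sum>v\<in>{v. u \<subseteq> v \<and> v \<subseteq> {1..d}}. C ^ (2 * card v) * \<gamma> v)"

end

theory Submission
  imports Defs "HOL-Analysis.Analysis"
begin

definition ev :: "'z set \<Rightarrow> ('z \<Rightarrow> 'z \<Rightarrow> real) \<Rightarrow> ('z \<times> real) list \<Rightarrow> 'z \<Rightarrow> real" where
  "ev Z K l = (\<lambda>y. sum_list (map (\<lambda>p. snd p * ksec Z K (fst p) y) l))"

definition bf :: "('z \<Rightarrow> 'z \<Rightarrow> real) \<Rightarrow> ('z \<times> real) list \<Rightarrow> ('z \<times> real) list \<Rightarrow> real" where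
  "bf K l r = sum_list (map (\<lambda>p. sum_list (map (\<lambda>q. snd p * snd q * K (fst p) (fst q)) r)) l)"

definition lz :: "'z set \<Rightarrow> ('z \<times> real) list \<Rightarrow> bool" where
  "lz Z l \<longleftrightarrow> (\<forall>p\<in>set l. fst p \<in> Z)"

definition scl :: "real \<Rightarrow> ('z \<times> real) list \<Rightarrow> ('z \<times> real) list" where
  "scl c l = map (\<lambda>p. (fst p, c * snd p)) l"

definition pdk :: "'z set \<Rightarrow> ('z \<Rightarrow> 'z \<Rightarrow> real) \<Rightarrow> bool" where
  "pdk Z K \<longleftrightarrow> (\<forall>x\<in>Z. \<forall>y\<in>Z. K x y = K y x) \<and> (\<forall>l. lz Z l \<longrightarrow> 0 \<le> bf K l l)"

lemma sum_list_swap: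
  fixes F :: "'a \<Rightarrow> 'b \<Rightarrow> real"
  shows "sum_list (map (\<lambda>p. sum_list (map (\<lambda>q. F p q) r)) l) = sum_list (map (\<lambda>q. sum_list (map (\<lambda>p. F p q) l)) r)"
  by (induction l) (simp_all add: sum_list_addf)

lemma sum_list_zero': "sum_list (map (\<lambda>p. (0::real)) l) = 0"
  by (induction l) auto

lemma lz_simps[simp]: "lz Z [] " "lz Z (p # l) \<longleftrightarrow> fst p \<in> Z \<and> lz Z l"
  "lz Z (l @ r) \<longleftrightarrow> lz Z l \<and> lz Z r" "lz Z (scl c l) \<longleftrightarrow> lz Z l"
  by (auto simp: lz_def scl_def)

lemma bf_append1[simp]: "bf K (l @ l') r = bf K l r + bf K l' r"
  by (simp add: bf_def)
lemma bf_append2[simp]: "bf K l (r @ r') = bf K l r + bf K l r'"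
  by (induction l) (auto simp: bf_def)
lemma bf_scl1[simp]: "bf K (scl c l) r = c * bf K l r"
  by (induction l) (auto simp: bf_def scl_def sum_list_const_mult[symmetric] algebra_simps)
lemma bf_scl2[simp]: "bf K l (scl c r) = c * bf K l r"
  by (simp add: bf_def scl_def o_def sum_list_const_mult[symmetric] algebra_simps)
lemma bf_Nil[simp]: "bf K [] r = 0" "bf K l [] = 0"
  by (simp_all add: bf_def sum_list_zero')

lemma bf_sym:
  assumes "\<forall>x\<in>Z. \<forall>y\<in>Z. K x y = K y x" "lz Z l" "lz Z r"
  shows "bf K l r = bf K r l"
proof -
  have "bf K l r = sum_list (map (\<lambda>q. sum_list (map (\<lambda>p. snd p * snd q * K (fst p) (fst q)) l)) r)"
    unfolding bf_def by (rule sum_list_swap)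
  also have "\<dots> = bf K r l" unfolding bf_def
    apply (rule arg_cong[where f=sum_list])
    apply (rule map_cong, simp)
    apply (rule arg_cong[where f=sum_list])
    apply (rule map_cong, simp)
    using assms by (auto simp: lz_def)
  finally show ?thesis .
qed

lemma ev_append[simp]: "ev Z K (l @ r) y = ev Z K l y + ev Z K r y"
  by (simp add: ev_def)
lemma ev_scl[simp]: "ev Z K (scl c l) y = c * ev Z K l y"
  by (induction l) (auto simp: ev_def scl_def algebra_simps)
lemma ev_Nil[simp]: "ev Z K [] y = 0"
  by (simp add: ev_def)
lemma ev_out: "y \<notin> Z \<Longrightarrow> ev Z K l y = 0"
  by (simp add: ev_def ksec_def sum_list_zero')
lemma ev_single: "ev Z K [(x,1)] = ksec Z K x"
  by (auto simp: ev_def)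

lemma bf_ev:
  assumes "\<forall>x\<in>Z. \<forall>y\<in>Z. K x y = K y x" "lz Z l" "lz Z r"
  shows "bf K l r = sum_list (map (\<lambda>q. snd q * ev Z K l (fst q)) r)"
proof -
  have "bf K l r = bf K r l" using bf_sym assms by blast
  also have "\<dots> = sum_list (map (\<lambda>q. snd q * ev Z K l (fst q)) r)"
    unfolding bf_def ev_def
    apply (rule arg_cong[where f=sum_list])
    apply (rule map_cong, simp)
    using assms
    by (auto simp: lz_def ksec_def sum_list_const_mult[symmetric] algebra_simps
        intro!: arg_cong[where f=sum_list] map_cong)
  finally show ?thesis .
qed

lemma quad_disc:
  fixes a b c :: real
  assumes "\<And>t. 0 \<le> a + 2 * b * t + c * t\<^sup>2" "0 \<le> c"
  shows "b\<^sup>2 \<le> a * c"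
proof (cases "c = 0")
  case True
  show ?thesis
  proof (cases "b = 0")
    case False
    have "0 \<le> a + 2 * b * (-(a+1)/(2*b)) + c * (-(a+1)/(2*b))\<^sup>2" by (rule assms(1))
    then show ?thesis using False True by (simp add: field_simps)
  qed (use True in simp)
next
  case False
  hence c: "c > 0" using assms(2) by simp
  have "0 \<le> a + 2 * b * (-b/c) + c * (-b/c)\<^sup>2" by (rule assms(1))
  then have "0 \<le> a - b\<^sup>2 / c" using c by (simp add: field_simps power2_eq_square)
  then show ?thesis using c by (simp add: field_simps)
qed


definition preh :: "('z \<Rightarrow> real) set \<Rightarrow> (('z \<Rightarrow> real) \<Rightarrow> ('z \<Rightarrow> real) \<Rightarrow> real) \<Rightarrow> bool" where
  "preh V ip \<longleftrightarrow>
     (\<lambda>_. 0) \<in> V \<and>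
     (\<forall>f\<in>V. \<forall>g\<in>V. (\<lambda>z. f z + g z) \<in> V) \<and>
     (\<forall>f\<in>V. \<forall>a::real. (\<lambda>z. a * f z) \<in> V) \<and>
     (\<forall>f\<in>V. \<forall>g\<in>V. \<forall>h\<in>V. ip (\<lambda>z. f z + g z) h = ip f h + ip g h) \<and>
     (\<forall>f\<in>V. \<forall>g\<in>V. \<forall>a::real. ip (\<lambda>z. a * f z) g = a * ip f g) \<and>
     (\<forall>f\<in>V. \<forall>g\<in>V. ip f g = ip g f) \<and>
     (\<forall>f\<in>V. ip f f \<ge> 0)"

lemma rkhs_preh: "is_rkhs Z K V ip \<Longrightarrow> preh V ip"
  unfolding is_rkhs_def preh_def by blast

context
  fixes V :: "('z \<Rightarrow> real) set" and ip
  assumes P: "preh V ip"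
begin

lemma P_zero[simp]: "(\<lambda>_. 0) \<in> V" using P by (simp add: preh_def)
lemma P_add[intro]: "f \<in> V \<Longrightarrow> g \<in> V \<Longrightarrow> (\<lambda>z. f z + g z) \<in> V" using P by (simp add: preh_def)
lemma P_scale[intro]: "f \<in> V \<Longrightarrow> (\<lambda>z. a * f z) \<in> V" using P by (simp add: preh_def)
lemma P_diff[intro]: "f \<in> V \<Longrightarrow> g \<in> V \<Longrightarrow> (\<lambda>z. f z - g z) \<in> V"
proof -
  assume a: "f \<in> V" "g \<in> V"
  show ?thesis using P_add[OF a(1) P_scale[OF a(2), of "-1"]] by simp
qed
lemma P_ip_add1: "f \<in> V \<Longrightarrow> g \<in> V \<Longrightarrow> h \<in> V \<Longrightarrow> ip (\<lambda>z. f z + g z) h = ip f h + ip g h"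
  using P by (simp add: preh_def)
lemma P_ip_scale1: "f \<in> V \<Longrightarrow> g \<in> V \<Longrightarrow> ip (\<lambda>z. a * f z) g = a * ip f g"
  using P by (simp add: preh_def)
lemma P_sym: "f \<in> V \<Longrightarrow> g \<in> V \<Longrightarrow> ip f g = ip g f"
  using P by (simp add: preh_def)
lemma P_nonneg: "f \<in> V \<Longrightarrow> 0 \<le> ip f f"
  using P by (simp add: preh_def)
lemma P_ip_add2: "f \<in> V \<Longrightarrow> g \<in> V \<Longrightarrow> h \<in> V \<Longrightarrow> ip h (\<lambda>z. f z + g z) = ip h f + ip h g"
  using P_sym[of h "\<lambda>z. f z + g z"] P_sym[of h f] P_sym[of h g] P_ip_add1[of f g h] P_add[of f g] by simp
lemma P_ip_scale2: "f \<in> V \<Longrightarrow> g \<in> V \<Longrightarrow> ip g (\<lambda>z. a * f z) = a * ip g f"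
  by (metis P_ip_scale1 P_scale P_sym)
lemma P_ip_zero1: "g \<in> V \<Longrightarrow> ip (\<lambda>_. 0) g = 0"
  using P_ip_scale1[of "\<lambda>_. 0" g 0] by simp
lemma P_ip_diff1: "f \<in> V \<Longrightarrow> g \<in> V \<Longrightarrow> h \<in> V \<Longrightarrow> ip (\<lambda>z. f z - g z) h = ip f h - ip g h"
proof -
  assume a: "f \<in> V" "g \<in> V" "h \<in> V"
  have m: "(\<lambda>z. - g z) \<in> V" using P_scale[OF a(2), of "-1"] by simp
  have "ip (\<lambda>z. f z + (\<lambda>z. (-1) * g z) z) h = ip f h + ip (\<lambda>z. (-1) * g z) h"
    using a P_scale[OF a(2), of "-1"] by (intro P_ip_add1) auto
  then show ?thesis using a P_ip_scale1[OF a(2) a(3), of "-1"] by simp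
qed
lemma P_ip_diff2: "f \<in> V \<Longrightarrow> g \<in> V \<Longrightarrow> h \<in> V \<Longrightarrow> ip h (\<lambda>z. f z - g z) = ip h f - ip h g"
  using P_sym[of h "\<lambda>z. f z - g z"] P_sym[of h f] P_sym[of h g] P_ip_diff1[of f g h] P_diff[of f g] by simp

lemma P_expand: "f \<in> V \<Longrightarrow> g \<in> V \<Longrightarrow>
   ip (\<lambda>z. f z + t * g z) (\<lambda>z. f z + t * g z) = ip f f + 2 * t * ip f g + t\<^sup>2 * ip g g"
proof -
  assume a: "f \<in> V" "g \<in> V"
  have tg: "(\<lambda>z. t * g z) \<in> V" using a by blast
  have "ip (\<lambda>z. f z + (\<lambda>z. t * g z) z) (\<lambda>z. f z + (\<lambda>z. t * g z) z)
      = ip f f + ip f (\<lambda>z. t * g z) + (ip (\<lambda>z. t * g z) f + ip (\<lambda>z. t * g z) (\<lambda>z. t * g z))"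
    using a tg by (simp add: P_ip_add1 P_ip_add2 P_add)
  also have "\<dots> = ip f f + 2 * t * ip f g + t\<^sup>2 * ip g g"
    using a tg by (simp add: P_ip_scale1 P_ip_scale2 P_sym[of f g] power2_eq_square algebra_simps)
  finally show ?thesis by simp
qed

lemma P_CS: "f \<in> V \<Longrightarrow> g \<in> V \<Longrightarrow> (ip f g)\<^sup>2 \<le> ip f f * ip g g"
proof -
  assume a: "f \<in> V" "g \<in> V"
  show ?thesis
  proof (rule quad_disc)
    fix t
    have "(\<lambda>z. f z + t * g z) \<in> V" using P_add[OF a(1) P_scale[OF a(2)]] by simp
    from P_nonneg[OF this] show "0 \<le> ip f f + 2 * ip f g * t + ip g g * t\<^sup>2"
      using P_expand[OF a, of t] by (simp add: algebra_simps)
  qed (use a P_nonneg in auto)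
qed

lemma P_CS': "f \<in> V \<Longrightarrow> g \<in> V \<Longrightarrow> \<bar>ip f g\<bar> \<le> sqrt (ip f f) * sqrt (ip g g)"
  by (metis P_CS real_sqrt_abs real_sqrt_le_mono real_sqrt_mult)

lemma P_tri: "f \<in> V \<Longrightarrow> g \<in> V \<Longrightarrow> sqrt (ip (\<lambda>z. f z + g z) (\<lambda>z. f z + g z)) \<le> sqrt (ip f f) + sqrt (ip g g)"
proof -
  assume a: "f \<in> V" "g \<in> V"
  have e: "ip (\<lambda>z. f z + g z) (\<lambda>z. f z + g z) = ip f f + 2 * ip f g + ip g g"
    using P_expand[OF a, of 1] by simp
  have "ip f f + 2 * ip f g + ip g g \<le> (sqrt (ip f f) + sqrt (ip g g))\<^sup>2"
    using P_CS'[OF a] P_nonneg[OF a(1)] P_nonneg[OF a(2)]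
    by (simp add: power2_eq_square algebra_simps)
  then have "sqrt (ip f f + 2 * ip f g + ip g g) \<le> sqrt ((sqrt (ip f f) + sqrt (ip g g))\<^sup>2)"
    by (rule real_sqrt_le_mono)
  then show ?thesis unfolding e using P_nonneg[OF a(1)] P_nonneg[OF a(2)] by simp
qed

lemma P_tri3: "a \<in> V \<Longrightarrow> b \<in> V \<Longrightarrow> c \<in> V \<Longrightarrow>
  sqrt (ip (\<lambda>z. a z - c z) (\<lambda>z. a z - c z)) \<le> sqrt (ip (\<lambda>z. a z - b z) (\<lambda>z. a z - b z)) + sqrt (ip (\<lambda>z. b z - c z) (\<lambda>z. b z - c z))"
  using P_tri[of "\<lambda>z. a z - b z" "\<lambda>z. b z - c z"] by (simp add: P_diff)

end


definition lin :: "('z \<Rightarrow> real) \<Rightarrow> ('z \<times> real) list \<Rightarrow> real" where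
  "lin f l = sum_list (map (\<lambda>p. snd p * f (fst p)) l)"

lemma lin_simps[simp]: "lin f [] = 0" "lin f (l @ r) = lin f l + lin f r"
  "lin f (scl c l) = c * lin f l" "lin f [(x,t)] = t * f x"
  by (auto simp: lin_def scl_def sum_list_const_mult[symmetric] o_def algebra_simps)

lemma bf_kadd: "bf (\<lambda>x y. A x y + B x y) l r = bf A l r + bf B l r"
  by (simp add: bf_def algebra_simps sum_list_addf)
lemma bf_kscale: "bf (\<lambda>x y. c * A x y) l r = c * bf A l r"
  by (simp add: bf_def sum_list_const_mult[symmetric] algebra_simps)
lemma bf_kdiff: "bf (\<lambda>x y. A x y - B x y) l r = bf A l r - bf B l r"
  by (simp add: bf_def algebra_simps sum_list_subtractf)
lemma bf_rank1: "bf (\<lambda>x y. f x * f y) l r = lin f l * lin f r"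
proof -
  have "lin f l * lin f r = sum_list (map (\<lambda>p. snd p * f (fst p) * lin f r) l)"
    unfolding lin_def[of f l] by (rule sum_list_mult_const[symmetric])
  also have "\<dots> = sum_list (map (\<lambda>p. sum_list (map (\<lambda>q. snd p * f (fst p) * (snd q * f (fst q))) r)) l)"
    unfolding lin_def by (simp add: sum_list_const_mult)
  also have "\<dots> = bf (\<lambda>x y. f x * f y) l r" unfolding bf_def
    by (simp add: algebra_simps)
  finally show ?thesis by simp
qed
lemma bf_const1: "bf (\<lambda>x y. 1) l l = (sum_list (map snd l))\<^sup>2"
  using bf_rank1[of "\<lambda>_. 1" l l] by (simp add: lin_def power2_eq_square)

lemma bf_single_right:
  assumes "\<forall>x\<in>Z. \<forall>y\<in>Z. K x y = K y x" "lz Z l" "x \<in> Z"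
  shows "bf K l [(x,t)] = t * ev Z K l x"
  using bf_ev[OF assms(1,2), of "[(x,t)]"] assms(3) by simp

context
  fixes Z K V ip
  assumes R: "is_rkhs Z K V ip"
begin

lemma R_preh: "preh V ip" using rkhs_preh[OF R] .
lemma R_sub: "f \<in> V \<Longrightarrow> z \<notin> Z \<Longrightarrow> f z = 0" using R unfolding is_rkhs_def by blast
lemma R_ksec: "x \<in> Z \<Longrightarrow> ksec Z K x \<in> V" using R unfolding is_rkhs_def by blast
lemma R_repr: "x \<in> Z \<Longrightarrow> f \<in> V \<Longrightarrow> ip f (ksec Z K x) = f x" using R unfolding is_rkhs_def by blast
lemma R_pos: "f \<in> V \<Longrightarrow> ip f f = 0 \<Longrightarrow> f = (\<lambda>_. 0)" using R unfolding is_rkhs_def by blast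
lemma R_complete: "(\<forall>n. s n \<in> V) \<Longrightarrow>
        (\<forall>e>0. \<exists>N. \<forall>m\<ge>N. \<forall>n\<ge>N. ip (\<lambda>z. s m z - s n z) (\<lambda>z. s m z - s n z) < e)
        \<Longrightarrow> (\<exists>g\<in>V. (\<lambda>n. ip (\<lambda>z. s n z - g z) (\<lambda>z. s n z - g z)) \<longlonglongrightarrow> 0)"
  using R unfolding is_rkhs_def by blast

lemma R_K: "x \<in> Z \<Longrightarrow> y \<in> Z \<Longrightarrow> ip (ksec Z K x) (ksec Z K y) = K y x"
  using R_repr[of y "ksec Z K x"] R_ksec by (simp add: ksec_def)

lemma R_symK: "x \<in> Z \<Longrightarrow> y \<in> Z \<Longrightarrow> K x y = K y x"
  using R_K[of x y] R_K[of y x] P_sym[OF R_preh] R_ksec by metis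

lemma R_symK': "\<forall>x\<in>Z. \<forall>y\<in>Z. K x y = K y x" using R_symK by blast

lemma R_ev: "lz Z l \<Longrightarrow> ev Z K l \<in> V"
proof (induction l)
  case Nil
  have "ev Z K [] = (\<lambda>_. 0)" by (auto simp: ev_def)
  then show ?case using P_zero[OF R_preh] by simp
next
  case (Cons p l)
  have e: "ev Z K (p # l) = (\<lambda>z. (\<lambda>z. snd p * ksec Z K (fst p) z) z + ev Z K l z)"
    by (auto simp: ev_def)
  show ?case unfolding e using Cons R_ksec by (intro P_add[OF R_preh] P_scale[OF R_preh]) auto
qed

lemma R_ip_ev: "lz Z l \<Longrightarrow> h \<in> V \<Longrightarrow> ip (ev Z K l) h = lin h l"
proof (induction l)
  case Nil
  have "ev Z K [] = (\<lambda>_. 0)" by (auto simp: ev_def)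
  then show ?case using P_ip_zero1[OF R_preh] Nil by simp
next
  case (Cons p l)
  have e: "ev Z K (p # l) = (\<lambda>z. (\<lambda>z. snd p * ksec Z K (fst p) z) z + ev Z K l z)"
    by (auto simp: ev_def)
  have "ip (ev Z K (p # l)) h = ip (\<lambda>z. snd p * ksec Z K (fst p) z) h + ip (ev Z K l) h"
    unfolding e using Cons R_ksec R_ev
    by (intro P_ip_add1[OF R_preh] P_scale[OF R_preh]) auto
  also have "\<dots> = snd p * h (fst p) + lin h l"
    using Cons R_ksec R_ev P_ip_scale1[OF R_preh] R_repr P_sym[OF R_preh] by auto
  finally show ?case by (simp add: lin_def)
qed

lemma R_ip_ev_ev: "lz Z l \<Longrightarrow> lz Z r \<Longrightarrow> ip (ev Z K l) (ev Z K r) = bf K l r"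
proof -
  assume a: "lz Z l" "lz Z r"
  have "ip (ev Z K l) (ev Z K r) = lin (ev Z K r) l" using R_ip_ev a R_ev by blast
  also have "\<dots> = bf K r l" using bf_ev[OF R_symK' a(2) a(1)] by (simp add: lin_def)
  also have "\<dots> = bf K l r" using bf_sym[OF R_symK' a(2) a(1)] .
  finally show ?thesis .
qed

lemma R_pdk: "pdk Z K"
  unfolding pdk_def using R_symK' R_ip_ev_ev R_ev P_nonneg[OF R_preh] by metis

lemma R_eval: "f \<in> V \<Longrightarrow> x \<in> Z \<Longrightarrow> \<bar>f x\<bar> \<le> sqrt (ip f f) * sqrt (K x x)"
  using P_CS'[OF R_preh, of f "ksec Z K x"] R_repr R_K R_ksec by metis

lemma R_E: "f \<in> V \<Longrightarrow> pdk Z (\<lambda>x y. ip f f * K x y - f x * f y)"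
proof -
  assume f: "f \<in> V"
  have "0 \<le> bf (\<lambda>x y. ip f f * K x y - f x * f y) l l" if l: "lz Z l" for l
  proof -
    have "lin f l = ip f (ev Z K l)" using R_ip_ev[OF l f] P_sym[OF R_preh] R_ev[OF l] f by metis
    then have "(lin f l)\<^sup>2 \<le> ip f f * bf K l l"
      using P_CS[OF R_preh f R_ev[OF l]] R_ip_ev_ev[OF l l] by simp
    then show ?thesis by (simp add: bf_kdiff bf_kscale bf_rank1 power2_eq_square)
  qed
  then show ?thesis unfolding pdk_def using R_symK by auto
qed

end


definition dl :: "('z \<times> real) list \<Rightarrow> ('z \<times> real) list \<Rightarrow> ('z \<times> real) list" where
  "dl a b = a @ scl (-1) b"

lemma ev_dl: "ev Z K (dl a b) = (\<lambda>z. ev Z K a z - ev Z K b z)"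
  by (auto simp: dl_def)

lemma lz_dl[simp]: "lz Z (dl a b) \<longleftrightarrow> lz Z a \<and> lz Z b" by (simp add: dl_def)

lemma eps_bound: "(e::real) > 0 \<Longrightarrow> \<exists>N. \<forall>n\<ge>N. inverse (real (Suc n)) < e"
proof -
  assume "e > 0"
  then obtain N where N: "inverse (real (Suc N)) < e" using reals_Archimedean by blast
  have "inverse (real (Suc n)) \<le> inverse (real (Suc N))" if "n \<ge> N" for n
    using that by (simp add: field_simps)
  then show ?thesis using N by (meson order.strict_trans1)
qed

lemma lin_aux: "(x::real) < e/4 \<Longrightarrow> y < e/4 \<Longrightarrow> a < q + x \<Longrightarrow> b < q + y \<Longrightarrow> 2*(a+b) - 4*q < e"
proof -
  assume "(x::real) < e/4" "y < e/4" "a < q + x" "b < q + y"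
  then have "2*a+2*b - 4*q < e" by linarith
  then show ?thesis by (simp add: distrib_left)
qed

lemma R_H:
  assumes R: "is_rkhs Z K V ip" and c: "0 \<le> c" and fZ: "\<forall>z. z \<notin> Z \<longrightarrow> f z = 0"
    and pd: "pdk Z (\<lambda>x y. c * K x y - f x * f y)"
  shows "f \<in> V \<and> ip f f \<le> c"
proof -
  note P = R_preh[OF R]
  have pdK: "pdk Z K" using R_pdk[OF R] .
  have symK: "\<forall>x\<in>Z. \<forall>y\<in>Z. K x y = K y x" using pdK by (simp add: pdk_def)
  define Q where "Q l = bf K l l - 2 * lin f l" for l
  have lin_bd: "(lin f l)\<^sup>2 \<le> c * bf K l l" if "lz Z l" for l
    using pd that unfolding pdk_def by (auto simp: bf_kdiff bf_kscale bf_rank1 power2_eq_square)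
  have Qlow: "- c \<le> Q l" if l: "lz Z l" for l
  proof -
    have a: "0 \<le> bf K l l" using pdK l by (simp add: pdk_def)
    have "(lin f l)\<^sup>2 \<le> ((c + bf K l l) / 2)\<^sup>2"
    proof -
      have h: "((c + bf K l l)/2)\<^sup>2 - c * bf K l l = ((c - bf K l l)/2)\<^sup>2"
        by (simp add: power2_eq_square field_simps)
      have "0 \<le> ((c - bf K l l)/2)\<^sup>2" by simp
      then show ?thesis using h lin_bd[OF l] by linarith
    qed
    then have "lin f l \<le> (c + bf K l l) / 2" by (rule power2_le_imp_le) (use a c in simp)
    then show ?thesis by (simp add: Q_def)
  qed
  define S where "S = {Q l | l. lz Z l}"
  define q where "q = Inf S"
  have Sne: "S \<noteq> {}" unfolding S_def by (auto intro: exI[of _ "[]"])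
  have Sbdd: "bdd_below S" unfolding S_def bdd_below_def using Qlow by (intro exI[of _ "-c"]) auto
  have q_le: "q \<le> Q l" if "lz Z l" for l
    unfolding q_def using that Sbdd by (intro cInf_lower) (auto simp: S_def)
  have ex: "\<forall>n. \<exists>l. lz Z l \<and> Q l < q + inverse (real (Suc n))"
  proof
    fix n
    have "Inf S < q + inverse (real (Suc n))" unfolding q_def by simp
    from cInf_lessD[OF Sne this] show "\<exists>l. lz Z l \<and> Q l < q + inverse (real (Suc n))"
      unfolding S_def by blast
  qed
  obtain s where "\<forall>n. lz Z (s n) \<and> Q (s n) < q + inverse (real (Suc n))"
    using choice[OF ex] by blast
  then have s: "\<And>n. lz Z (s n)" "\<And>n. Q (s n) < q + inverse (real (Suc n))" by auto
  have para: "bf K (dl a b) (dl a b) = 2 * (Q a + Q b) - 4 * Q (scl (1/2) (a @ b))"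
    if "lz Z a" "lz Z b" for a b
    using bf_sym[OF symK that(2) that(1)] by (simp add: dl_def Q_def algebra_simps)
  define T where "T n = ev Z K (s n)" for n
  have TV: "T n \<in> V" for n unfolding T_def using R_ev[OF R s(1)] .
  have Tdiff: "ip (\<lambda>z. T m z - T n z) (\<lambda>z. T m z - T n z) = bf K (dl (s m) (s n)) (dl (s m) (s n))" for m n
    unfolding T_def ev_dl[symmetric] using R_ip_ev_ev[OF R] s(1) by simp
  have Tcauchy: "\<forall>e>0. \<exists>N. \<forall>m\<ge>N. \<forall>n\<ge>N. ip (\<lambda>z. T m z - T n z) (\<lambda>z. T m z - T n z) < e"
  proof (intro allI impI)
    fix e :: real assume "e > 0"
    then obtain N where N: "\<forall>n\<ge>N. inverse (real (Suc n)) < e / 4" using eps_bound[of "e/4"] by auto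
    have "ip (\<lambda>z. T m z - T n z) (\<lambda>z. T m z - T n z) < e" if "m \<ge> N" "n \<ge> N" for m n
    proof -
      have "bf K (dl (s m) (s n)) (dl (s m) (s n)) = 2 * (Q (s m) + Q (s n)) - 4 * Q (scl (1/2) (s m @ s n))"
        using para s(1) by blast
      also have "\<dots> \<le> 2 * (Q (s m) + Q (s n)) - 4 * q" using q_le[of "scl (1/2) (s m @ s n)"] s(1) by simp
      also have "\<dots> < e"
      proof -
        have "inverse (real (Suc m)) < e/4" "inverse (real (Suc n)) < e/4" using N that by auto
        then show ?thesis using s(2)[of m] s(2)[of n] lin_aux by blast
      qed
      finally show ?thesis using Tdiff by simp
    qed
    then show "\<exists>N. \<forall>m\<ge>N. \<forall>n\<ge>N. ip (\<lambda>z. T m z - T n z) (\<lambda>z. T m z - T n z) < e" by blast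
  qed
  obtain g where g: "g \<in> V" and Dlim: "(\<lambda>n. ip (\<lambda>z. T n z - g z) (\<lambda>z. T n z - g z)) \<longlonglongrightarrow> 0"
    using R_complete[OF R, of T] TV Tcauchy by blast
  define Dn where "Dn n = ip (\<lambda>z. T n z - g z) (\<lambda>z. T n z - g z)" for n
  have DV: "(\<lambda>z. T n z - g z) \<in> V" for n using P_diff[OF P TV g] .
  have Dnn: "0 \<le> Dn n" for n unfolding Dn_def using P_nonneg[OF P DV] .
  have Dlim': "Dn \<longlonglongrightarrow> 0" using Dlim unfolding Dn_def by simp
  have Tpt: "(\<lambda>n. T n x) \<longlonglongrightarrow> g x" if x: "x \<in> Z" for x
  proof -
    have "(\<lambda>n. sqrt (Dn n) * sqrt (K x x)) \<longlonglongrightarrow> sqrt 0 * sqrt (K x x)"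
      by (intro tendsto_mult tendsto_real_sqrt Dlim' tendsto_const)
    then have l0: "(\<lambda>n. sqrt (Dn n) * sqrt (K x x)) \<longlonglongrightarrow> 0" by simp
    have "norm (T n x - g x) \<le> sqrt (Dn n) * sqrt (K x x)" for n
      using R_eval[OF R DV x, of n] unfolding Dn_def by simp
    then have "(\<lambda>n. T n x - g x) \<longlonglongrightarrow> 0"
      by (intro Lim_null_comparison[OF _ l0]) auto
    then have "(\<lambda>n. (T n x - g x) + g x) \<longlonglongrightarrow> 0 + g x" by (intro tendsto_add tendsto_const)
    then show ?thesis by simp
  qed
  have Qlim: "(\<lambda>n. Q (s n)) \<longlonglongrightarrow> q"
  proof (rule tendsto_sandwich[of "\<lambda>_. q" _ _ "\<lambda>n. q + inverse (real (Suc n))"])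
    show "\<forall>\<^sub>F n in sequentially. q \<le> Q (s n)" using q_le s(1) by auto
    show "\<forall>\<^sub>F n in sequentially. Q (s n) \<le> q + inverse (real (Suc n))"
      by (rule always_eventually) (use s(2) less_imp_le in blast)
    have "(\<lambda>n. q + inverse (real (Suc n))) \<longlonglongrightarrow> q + 0"
      by (intro tendsto_add tendsto_const LIMSEQ_inverse_real_of_nat)
    then show "(\<lambda>n. q + inverse (real (Suc n))) \<longlonglongrightarrow> q" by simp
  qed simp
  have Qext: "Q (l @ [(x,t)]) = Q l + 2 * t * (ev Z K l x - f x) + t\<^sup>2 * K x x"
    if l: "lz Z l" and x: "x \<in> Z" for l x t
  proof -
    have "bf K [(x,t)] l = t * ev Z K l x"
      using bf_sym[OF symK, of "[(x,t)]" l] l x bf_single_right[OF symK l x] by simp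
    moreover have "bf K [(x,t)] [(x,t)] = t\<^sup>2 * K x x" by (simp add: bf_def power2_eq_square)
    ultimately show ?thesis using bf_single_right[OF symK l x, of t] by (simp add: Q_def algebra_simps)
  qed
  have gf: "g x = f x" if x: "x \<in> Z" for x
  proof -
    have "0 \<le> bf K [(x,1)] [(x,1)]" using pdK x unfolding pdk_def by simp
    then have Kxx: "0 \<le> K x x" by (simp add: bf_def)
    have "0 \<le> 0 + 2 * (g x - f x) * t + K x x * t\<^sup>2" for t
    proof -
      have lim: "(\<lambda>n. Q (s n) + 2 * t * (T n x - f x) + t\<^sup>2 * K x x) \<longlonglongrightarrow> q + 2 * t * (g x - f x) + t\<^sup>2 * K x x"
        by (intro tendsto_add tendsto_mult tendsto_diff tendsto_const Qlim Tpt x)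
      have "q \<le> Q (s n) + 2 * t * (T n x - f x) + t\<^sup>2 * K x x" for n
        using q_le[of "s n @ [(x,t)]"] Qext[OF s(1) x, of n t] s(1) x unfolding T_def by simp
      then have "q \<le> q + 2 * t * (g x - f x) + t\<^sup>2 * K x x"
        using LIMSEQ_le_const[OF lim] by blast
      then show ?thesis by (simp add: algebra_simps)
    qed
    from quad_disc[OF this Kxx] have "(g x - f x)\<^sup>2 \<le> 0" by simp
    then show ?thesis by simp
  qed
  have gf': "g = f"
  proof
    fix x show "g x = f x"
      using gf R_sub[OF R g] fZ by (cases "x \<in> Z") auto
  qed
  have nb: "ip g g \<le> Dn n + c" for n
  proof -
    have "lin f (s n) = ip (T n) g" unfolding T_def using R_ip_ev[OF R s(1) g] gf' by simp
    moreover have "bf K (s n) (s n) = ip (T n) (T n)" unfolding T_def using R_ip_ev_ev[OF R s(1) s(1)] by simp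
    moreover have "Dn n = ip (T n) (T n) - 2 * ip (T n) g + ip g g"
      unfolding Dn_def using P_ip_diff1[OF P TV g DV] P_ip_diff2[OF P TV g TV] P_ip_diff2[OF P TV g g]
        P_sym[OF P TV g] by simp
    ultimately have "Q (s n) = Dn n - ip g g" by (simp add: Q_def)
    then show ?thesis using Qlow[OF s(1)[of n]] by simp
  qed
  have "(\<lambda>n. Dn n + c) \<longlonglongrightarrow> 0 + c" by (intro tendsto_add Dlim' tendsto_const)
  then have "ip g g \<le> 0 + c" using nb by (intro LIMSEQ_le_const) auto
  then show ?thesis using g gf' by simp
qed


lemma rkhs_sub_le:
  assumes R1: "is_rkhs Z K V ip" and R2: "is_rkhs Z K V' ip'"
  shows "V \<subseteq> V' \<and> (\<forall>f\<in>V. ip' f f \<le> ip f f)"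
proof -
  have "f \<in> V' \<and> ip' f f \<le> ip f f" if f: "f \<in> V" for f
  proof (rule R_H[OF R2])
    show "0 \<le> ip f f" using P_nonneg[OF R_preh[OF R1] f] .
    show "\<forall>z. z \<notin> Z \<longrightarrow> f z = 0" using R_sub[OF R1 f] by blast
    show "pdk Z (\<lambda>x y. ip f f * K x y - f x * f y)" using R_E[OF R1 f] .
  qed
  then show ?thesis by blast
qed

lemma rkhs_unique:
  assumes R1: "is_rkhs Z K V ip" and R2: "is_rkhs Z K V' ip'"
  shows "V = V' \<and> (\<forall>f\<in>V. ip' f f = ip f f)"
  using rkhs_sub_le[OF R1 R2] rkhs_sub_le[OF R2 R1] by (meson antisym subset_antisym subsetD)

lemma rkhs_char:
  assumes R: "is_rkhs Z K V ip"
  shows "rkhs Z K = V" "f \<in> V \<Longrightarrow> rkhs_norm Z K f = sqrt (ip f f)"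
proof -
  show rk: "rkhs Z K = V" unfolding rkhs_def
  proof (rule the_equality)
    show "\<exists>ip. is_rkhs Z K V ip" using R by blast
    fix V' assume "\<exists>ip. is_rkhs Z K V' ip"
    then obtain ip' where "is_rkhs Z K V' ip'" by blast
    then show "V' = V" using rkhs_unique[OF R] by blast
  qed
  assume f: "f \<in> V"
  have "\<exists>ip. is_rkhs Z K (rkhs Z K) ip" using R rk by blast
  then have "is_rkhs Z K V (SOME ip. is_rkhs Z K (rkhs Z K) ip)" using someI_ex rk by metis
  then have "(SOME ip. is_rkhs Z K (rkhs Z K) ip) f f = ip f f" using rkhs_unique[OF R] f by blast
  then show "rkhs_norm Z K f = sqrt (ip f f)" unfolding rkhs_norm_def by simp
qed


lemma pdk_sym: "pdk Z K \<Longrightarrow> x \<in> Z \<Longrightarrow> y \<in> Z \<Longrightarrow> K x y = K y x"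
  by (simp add: pdk_def)
lemma pdk_sym': "pdk Z K \<Longrightarrow> \<forall>x\<in>Z. \<forall>y\<in>Z. K x y = K y x"
  by (simp add: pdk_def)
lemma pdk_nonneg: "pdk Z K \<Longrightarrow> lz Z l \<Longrightarrow> 0 \<le> bf K l l"
  by (simp add: pdk_def)

lemma bf_cong:
  assumes "\<forall>x\<in>fst ` set l. \<forall>y\<in>fst ` set r. A x y = B x y"
  shows "bf A l r = bf B l r"
  unfolding bf_def
  apply (rule arg_cong[where f=sum_list], rule map_cong[OF refl])
  apply (rule arg_cong[where f=sum_list], rule map_cong[OF refl])
  using assms by auto

lemma pdk_add: "pdk Z A \<Longrightarrow> pdk Z B \<Longrightarrow> pdk Z (\<lambda>x y. A x y + B x y)"
  unfolding pdk_def by (auto simp: bf_kadd add_nonneg_nonneg)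
lemma pdk_scale: "pdk Z A \<Longrightarrow> 0 \<le> c \<Longrightarrow> pdk Z (\<lambda>x y. c * A x y)"
  unfolding pdk_def by (auto simp: bf_kscale)
lemma pdk_one: "pdk Z (\<lambda>x y. 1)"
  unfolding pdk_def by (auto simp: bf_const1)
lemma pdk_zero: "pdk Z (\<lambda>x y. 0)"
  using pdk_scale[OF pdk_one, of 0] by simp

lemma bf_ksum: "bf (\<lambda>x y. \<Sum>u\<in>U. A u x y) l r = (\<Sum>u\<in>U. bf (A u) l r)"
proof (cases "finite U")
  case True
  then show ?thesis
  proof (induction U rule: finite_induct)
    case empty
    then show ?case using bf_kscale[of 0 "\<lambda>x y. 1" l r] by simp
  next
    case (insert a U)
    then show ?case by (simp add: bf_kadd)
  qed
next
  case False
  then show ?thesis using bf_kscale[of 0 "\<lambda>x y. 1" l r] by simp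
qed

lemma pdk_sum: "(\<And>u. u \<in> U \<Longrightarrow> pdk Z (A u)) \<Longrightarrow> pdk Z (\<lambda>x y. \<Sum>u\<in>U. A u x y)"
  unfolding pdk_def bf_ksum by (auto intro!: sum_nonneg)

lemma sum_list_upd0:
  fixes gs :: "('z \<Rightarrow> real) list"
  shows "sum_list (map (\<lambda>g. (g(p:=0)) x * (g(p:=0)) y) gs) =
     (if x = p \<or> y = p then 0 else sum_list (map (\<lambda>g. g x * g y) gs))"
  by (induction gs) auto

lemma pdk_decomp:
  assumes "pdk Z A" "set ps \<subseteq> Z"
  shows "\<exists>gs :: ('z \<Rightarrow> real) list. \<forall>x\<in>set ps. \<forall>y\<in>set ps. A x y = sum_list (map (\<lambda>g. g x * g y) gs)"
  using assms
proof (induction ps arbitrary: A)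
  case Nil
  then show ?case by auto
next
  case (Cons p ps)
  have pZ: "p \<in> Z" and psZ: "set ps \<subseteq> Z" using Cons.prems by auto
  show ?case
  proof (cases "p \<in> set ps")
    case True
    then have "set (p # ps) = set ps" by auto
    then show ?thesis using Cons.IH[OF Cons.prems(1) psZ] by simp
  next
    case pnot: False
    have symA: "\<forall>x\<in>Z. \<forall>y\<in>Z. A x y = A y x" using pdk_sym'[OF Cons.prems(1)] .
    have two: "0 \<le> t\<^sup>2 * A p p + 2 * t * A p y + A y y" if y: "y \<in> Z" for y t
    proof -
      have "0 \<le> bf A [(p,t),(y,1)] [(p,t),(y,1)]" using pdk_nonneg[OF Cons.prems(1)] pZ y by simp
      then show ?thesis using symA pZ y by (simp add: bf_def power2_eq_square algebra_simps)
    qed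
    have App: "0 \<le> A p p" using two[OF pZ, of 1] two[OF pZ, of "-1"] by simp
    show ?thesis
    proof (cases "A p p = 0")
      case True
      have Ap0: "A p y = 0" if y: "y \<in> Z" for y
      proof -
        have "(A p y)\<^sup>2 \<le> A y y * 0"
          by (rule quad_disc) (use two[OF y] True in \<open>auto simp: algebra_simps\<close>)
        then show ?thesis by simp
      qed
      obtain gs where gs: "\<forall>x\<in>set ps. \<forall>y\<in>set ps. A x y = sum_list (map (\<lambda>g. g x * g y) gs)"
        using Cons.IH[OF Cons.prems(1) psZ] by blast
      show ?thesis
      proof (intro exI[of _ "map (\<lambda>g. g(p:=0)) gs"] ballI)
        fix x y assume x: "x \<in> set (p # ps)" and y: "y \<in> set (p # ps)"
        have xZ: "x \<in> Z" and yZ: "y \<in> Z" using x y Cons.prems by auto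
        have R: "sum_list (map (\<lambda>g. g x * g y) (map (\<lambda>g. g(p:=0)) gs))
             = (if x = p \<or> y = p then 0 else sum_list (map (\<lambda>g. g x * g y) gs))"
          by (simp add: o_def sum_list_upd0)
        show "A x y = sum_list (map (\<lambda>g. g x * g y) (map (\<lambda>g. g(p:=0)) gs))"
        proof (cases "x = p \<or> y = p")
          case True
          have "A x y = 0"
          proof (cases "x = p")
            case True then show ?thesis using Ap0[OF yZ] by simp
          next
            case False then have "y = p" using \<open>x = p \<or> y = p\<close> by simp
            then show ?thesis using Ap0[OF xZ] symA xZ pZ by metis
          qed
          then show ?thesis unfolding R using True by simp
        next
          case False
          then have "x \<in> set ps" "y \<in> set ps" using x y by auto
          then show ?thesis unfolding R using gs False by simp
        qed
      qed
    next
      case False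
      then have Apos: "A p p > 0" using App by simp
      define A' where "A' x y = A x y - (A x p * A y p) / A p p" for x y
      have pdA': "pdk Z A'"
        unfolding pdk_def
      proof (intro conjI ballI allI impI)
        fix x y assume "x \<in> Z" "y \<in> Z"
        then show "A' x y = A' y x" unfolding A'_def using symA by (simp add: algebra_simps)
      next
        fix l assume l: "lz Z l"
        define L where "L = lin (\<lambda>x. A x p) l"
        define t where "t = - L / A p p"
        have "bf A' l l = bf A l l - L * L / A p p"
        proof -
          have "bf A' l l = bf A l l - bf (\<lambda>x y. (1 / A p p) * ((\<lambda>x. A x p) x * (\<lambda>x. A x p) y)) l l"
            unfolding A'_def by (subst bf_kdiff[symmetric]) (simp add: divide_inverse algebra_simps)
          also have "\<dots> = bf A l l - L * L / A p p"
            unfolding bf_kscale bf_rank1 L_def by simp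
          finally show ?thesis .
        qed
        moreover have "bf A ([(p,t)] @ l) ([(p,t)] @ l) = bf A l l + 2 * t * L + t * t * A p p"
        proof -
          have a1: "bf A l [(p,t)] = t * L"
            unfolding L_def lin_def bf_def by (simp add: sum_list_const_mult[symmetric] algebra_simps)
          have a2: "bf A [(p,t)] l = bf A l [(p,t)]" using bf_sym[OF symA, of "[(p,t)]" l] pZ l by simp
          have a3: "bf A [(p,t)] [(p,t)] = t * t * A p p" by (simp add: bf_def)
          show ?thesis unfolding bf_append1 bf_append2 using a1 a2 a3 by simp
        qed
        moreover have "0 \<le> bf A ([(p,t)] @ l) ([(p,t)] @ l)"
          using pdk_nonneg[OF Cons.prems(1)] pZ l by simp
        moreover have "bf A l l + 2 * t * L + t * t * A p p = bf A l l - L * L / A p p"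
          unfolding t_def using Apos by (simp add: field_simps)
        ultimately show "0 \<le> bf A' l l" by linarith
      qed
      obtain gs where gs: "\<forall>x\<in>set ps. \<forall>y\<in>set ps. A' x y = sum_list (map (\<lambda>g. g x * g y) gs)"
        using Cons.IH[OF pdA' psZ] by blast
      define g0 where "g0 x = A x p / sqrt (A p p)" for x
      have g0sq: "g0 x * g0 y = A x p * A y p / A p p" for x y
        unfolding g0_def using Apos by (simp add: field_simps)
      show ?thesis
      proof (intro exI[of _ "map (\<lambda>g. g(p:=0)) gs @ [g0]"] ballI)
        fix x y assume x: "x \<in> set (p # ps)" and y: "y \<in> set (p # ps)"
        have xZ: "x \<in> Z" and yZ: "y \<in> Z" using x y Cons.prems by auto
        have R: "sum_list (map (\<lambda>g. g x * g y) (map (\<lambda>g. g(p:=0)) gs @ [g0]))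
             = (if x = p \<or> y = p then 0 else sum_list (map (\<lambda>g. g x * g y) gs)) + A x p * A y p / A p p"
          by (simp add: o_def sum_list_upd0 g0sq)
        show "A x y = sum_list (map (\<lambda>g. g x * g y) (map (\<lambda>g. g(p:=0)) gs @ [g0]))"
        proof (cases "x = p \<or> y = p")
          case True
          show ?thesis
          proof (cases "x = p")
            case True then show ?thesis unfolding R using Apos symA yZ pZ by auto
          next
            case False then have "y = p" using \<open>x = p \<or> y = p\<close> by simp
            then show ?thesis unfolding R using Apos by simp
          qed
        next
          case False
          then have "x \<in> set ps" "y \<in> set ps" using x y by auto
          then have "A' x y = sum_list (map (\<lambda>g. g x * g y) gs)" using gs by blast
          then show ?thesis unfolding R using False by (simp add: A'_def)
        qed
      qed
    qed
  qed
qed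

lemma pdk_schur:
  assumes A: "pdk Z A" and B: "pdk Z B"
  shows "pdk Z (\<lambda>x y. A x y * B x y)"
  unfolding pdk_def
proof (intro conjI ballI allI impI)
  fix x y assume "x \<in> Z" "y \<in> Z"
  then show "A x y * B x y = A y x * B y x" using pdk_sym[OF A] pdk_sym[OF B] by simp
next
  fix l assume l: "lz Z l"
  have "set (map fst l) \<subseteq> Z" using l by (auto simp: lz_def)
  then obtain gs where gs: "\<forall>x\<in>set (map fst l). \<forall>y\<in>set (map fst l). A x y = sum_list (map (\<lambda>g. g x * g y) gs)"
    using pdk_decomp[OF A] by blast
  define lg where "lg g = map (\<lambda>p. (fst p, snd p * g (fst p))) l" for g :: "'a \<Rightarrow> real"
  have lgZ: "lz Z (lg g)" for g using l by (auto simp: lz_def lg_def)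
  have lgbf: "bf B (lg g) (lg g) = bf (\<lambda>x y. g x * g y * B x y) l l" for g
    unfolding lg_def bf_def by (simp add: o_def algebra_simps)
  have "bf (\<lambda>x y. A x y * B x y) l l = bf (\<lambda>x y. sum_list (map (\<lambda>g. g x * g y * B x y) gs)) l l"
    by (rule bf_cong) (use gs in \<open>auto simp: sum_list_mult_const[symmetric]\<close>)
  also have "\<dots> = sum_list (map (\<lambda>g. bf B (lg g) (lg g)) gs)"
    unfolding lgbf
  proof (induction gs)
    case Nil
    then show ?case using bf_kscale[of 0 "\<lambda>x y. 1" l l] by simp
  next
    case (Cons g gs)
    then show ?case by (simp add: bf_kadd)
  qed
  also have "\<dots> \<ge> 0" using pdk_nonneg[OF B lgZ] by (intro sum_list_nonneg) auto
  finally show "0 \<le> bf (\<lambda>x y. A x y * B x y) l l" .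
qed

lemma pdk_prod:
  assumes "finite U" "\<And>j. j \<in> U \<Longrightarrow> pdk Z (A j)"
  shows "pdk Z (\<lambda>x y. \<Prod>j\<in>U. A j x y)"
  using assms
proof (induction U rule: finite_induct)
  case empty
  then show ?case using pdk_one by simp
next
  case (insert a U)
  then show ?case using pdk_schur[of Z "A a" "\<lambda>x y. \<Prod>j\<in>U. A j x y"] by simp
qed

lemma pdk_diff_prod:
  assumes "finite U" "\<And>j. j \<in> U \<Longrightarrow> pdk Z (B j)" "\<And>j. j \<in> U \<Longrightarrow> pdk Z (\<lambda>x y. A j x y - B j x y)"
  shows "pdk Z (\<lambda>x y. (\<Prod>j\<in>U. A j x y) - (\<Prod>j\<in>U. B j x y))"
  using assms
proof (induction U rule: finite_induct)
  case empty
  then show ?case using pdk_zero by simp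
next
  case (insert a U)
  have pA: "pdk Z (A j)" if "j \<in> insert a U" for j
  proof -
    have "pdk Z (\<lambda>x y. (A j x y - B j x y) + B j x y)"
      using insert.prems that by (intro pdk_add) auto
    then show ?thesis by simp
  qed
  have e: "(\<lambda>x y. (\<Prod>j\<in>insert a U. A j x y) - (\<Prod>j\<in>insert a U. B j x y)) =
     (\<lambda>x y. (A a x y - B a x y) * (\<Prod>j\<in>U. A j x y) + B a x y * ((\<Prod>j\<in>U. A j x y) - (\<Prod>j\<in>U. B j x y)))"
    using insert.hyps by (simp add: algebra_simps)
  have p1: "pdk Z (\<lambda>x y. A a x y - B a x y)" using insert.prems by auto
  have p2: "pdk Z (\<lambda>x y. \<Prod>j\<in>U. A j x y)" using pA insert.hyps by (intro pdk_prod) auto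
  have p3: "pdk Z (B a)" using insert.prems by auto
  have p4: "pdk Z (\<lambda>x y. (\<Prod>j\<in>U. A j x y) - (\<Prod>j\<in>U. B j x y))" using insert by auto
  show ?case unfolding e
    by (rule pdk_add[OF pdk_schur[OF p1 p2] pdk_schur[OF p3 p4]])
qed


definition nrm :: "('z \<Rightarrow> 'z \<Rightarrow> real) \<Rightarrow> ('z \<times> real) list \<Rightarrow> real" where
  "nrm K l = sqrt \<bar>bf K l l\<bar>"

definition good :: "'z set \<Rightarrow> ('z \<Rightarrow> 'z \<Rightarrow> real) \<Rightarrow> (nat \<Rightarrow> ('z \<times> real) list) \<Rightarrow> ('z \<Rightarrow> real) \<Rightarrow> bool" where
  "good Z K s f \<longleftrightarrow> (\<forall>n. lz Z (s n)) \<and>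
     (\<forall>e>0. \<exists>N. \<forall>m\<ge>N. \<forall>n\<ge>N. nrm K (dl (s m) (s n)) < e) \<and>
     (\<forall>y. (\<lambda>n. ev Z K (s n) y) \<longlonglongrightarrow> f y)"

lemma tendsto_sum_list_map:
  fixes F :: "nat \<Rightarrow> 'b \<Rightarrow> real"
  shows "(\<And>q. q \<in> set r \<Longrightarrow> (\<lambda>n. F n q) \<longlonglongrightarrow> G q) \<Longrightarrow> (\<lambda>n. sum_list (map (F n) r)) \<longlonglongrightarrow> sum_list (map G r)"
  by (induction r) (auto intro!: tendsto_add)

context
  fixes Z :: "'z set" and K
  assumes pd: "pdk Z K"
begin

lemma symK: "\<forall>x\<in>Z. \<forall>y\<in>Z. K x y = K y x" using pdk_sym'[OF pd] .
lemma qf_nn: "lz Z l \<Longrightarrow> 0 \<le> bf K l l" using pdk_nonneg[OF pd] by blast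
lemma nrm_nn: "0 \<le> nrm K l" by (simp add: nrm_def)
lemma nrm_sq: "lz Z l \<Longrightarrow> (nrm K l)\<^sup>2 = bf K l l" by (simp add: nrm_def qf_nn)
lemma nrm_alt: "lz Z l \<Longrightarrow> nrm K l = sqrt (bf K l l)" by (simp add: nrm_def qf_nn)

lemma bf_CS: assumes "lz Z l" "lz Z r" shows "\<bar>bf K l r\<bar> \<le> nrm K l * nrm K r"
proof -
  have "(bf K l r)\<^sup>2 \<le> bf K l l * bf K r r"
  proof (rule quad_disc)
    fix t
    have "0 \<le> bf K (l @ scl t r) (l @ scl t r)" using qf_nn[of "l @ scl t r"] assms by simp
    moreover have "bf K (l @ scl t r) (l @ scl t r) = bf K l l + t * bf K r l + t * bf K l r + t * t * bf K r r"
      by (simp add: algebra_simps)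
    moreover have "bf K r l = bf K l r" using bf_sym[OF symK assms(2) assms(1)] .
    ultimately show "0 \<le> bf K l l + 2 * bf K l r * t + bf K r r * t\<^sup>2"
      by (simp add: power2_eq_square algebra_simps)
  qed (use qf_nn assms in auto)
  then have "sqrt ((bf K l r)\<^sup>2) \<le> sqrt (bf K l l * bf K r r)" by (rule real_sqrt_le_mono)
  then show ?thesis using assms by (simp add: nrm_alt real_sqrt_mult)
qed

lemma nrm_tri: assumes "lz Z l" "lz Z r" shows "nrm K (l @ r) \<le> nrm K l + nrm K r"
proof -
  have "bf K (l @ r) (l @ r) = bf K l l + 2 * bf K l r + bf K r r"
    using bf_sym[OF symK assms(2) assms(1)] by simp
  also have "\<dots> \<le> (nrm K l)\<^sup>2 + 2 * (nrm K l * nrm K r) + (nrm K r)\<^sup>2"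
    using bf_CS[OF assms] nrm_sq assms by simp
  also have "\<dots> = (nrm K l + nrm K r)\<^sup>2" by (simp add: power2_eq_square algebra_simps)
  finally have "sqrt (bf K (l @ r) (l @ r)) \<le> sqrt ((nrm K l + nrm K r)\<^sup>2)" by (rule real_sqrt_le_mono)
  then show ?thesis using assms by (simp add: nrm_alt[of "l @ r"] nrm_nn)
qed

lemma nrm_scl: "nrm K (scl c l) = \<bar>c\<bar> * nrm K l"
  by (simp add: nrm_def real_sqrt_mult abs_mult mult.assoc[symmetric])

lemma nrm_dl: assumes "lz Z a" "lz Z b" shows "nrm K (dl a b) \<le> nrm K a + nrm K b"
  using nrm_tri[of a "scl (-1) b"] assms nrm_scl[of "-1" b] by (simp add: dl_def)

lemma bf_evcong:
  assumes "lz Z l" "lz Z l'" "lz Z r" "\<forall>y\<in>Z. ev Z K l y = ev Z K l' y"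
  shows "bf K l r = bf K l' r"
proof -
  have "bf K l r = sum_list (map (\<lambda>q. snd q * ev Z K l (fst q)) r)" using bf_ev[OF symK assms(1,3)] .
  also have "\<dots> = sum_list (map (\<lambda>q. snd q * ev Z K l' (fst q)) r)"
    using assms(3,4) by (auto simp: lz_def intro!: arg_cong[where f=sum_list] map_cong)
  also have "\<dots> = bf K l' r" using bf_ev[OF symK assms(2,3)] by simp
  finally show ?thesis .
qed

lemma nrm_evcong:
  assumes "lz Z l" "lz Z l'" "\<forall>y\<in>Z. ev Z K l y = ev Z K l' y"
  shows "nrm K l = nrm K l'"
proof -
  have "bf K l l = bf K l' l" using bf_evcong[OF assms(1,2,1) assms(3)] .
  also have "\<dots> = bf K l l'" using bf_sym[OF symK assms(2,1)] .
  also have "\<dots> = bf K l' l'" using bf_evcong[OF assms(1,2,2) assms(3)] .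
  finally show ?thesis by (simp add: nrm_def)
qed

lemma nrm_dl3: assumes "lz Z a" "lz Z b" "lz Z c" shows "nrm K (dl a c) \<le> nrm K (dl a b) + nrm K (dl b c)"
proof -
  have "nrm K (dl a c) = nrm K (dl a b @ dl b c)" using assms by (intro nrm_evcong) (auto simp: dl_def)
  also have "\<dots> \<le> nrm K (dl a b) + nrm K (dl b c)" using assms by (intro nrm_tri) auto
  finally show ?thesis .
qed

lemma ev_bound: assumes "lz Z l" "y \<in> Z" shows "\<bar>ev Z K l y\<bar> \<le> nrm K l * sqrt (K y y)"
proof -
  have "ev Z K l y = bf K l [(y,1)]" using bf_single_right[OF symK assms, of 1] by simp
  moreover have "nrm K [(y,1)] = sqrt (K y y)" using nrm_alt[of "[(y,1)]"] assms(2) by (simp add: bf_def)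
  ultimately show ?thesis using bf_CS[OF assms(1), of "[(y,1)]"] assms(2) by simp
qed

lemma good_lz: "good Z K s f \<Longrightarrow> lz Z (s n)" by (simp add: good_def)
lemma good_cauchy: "good Z K s f \<Longrightarrow> e > 0 \<Longrightarrow> \<exists>N. \<forall>m\<ge>N. \<forall>n\<ge>N. nrm K (dl (s m) (s n)) < e"
  by (simp add: good_def)
lemma good_pt: "good Z K s f \<Longrightarrow> (\<lambda>n. ev Z K (s n) y) \<longlonglongrightarrow> f y" by (simp add: good_def)

lemma good_bounded: assumes g: "good Z K s f" shows "\<exists>B\<ge>0. \<forall>n. nrm K (s n) \<le> B"
proof -
  obtain N where N: "\<forall>m\<ge>N. \<forall>n\<ge>N. nrm K (dl (s m) (s n)) < 1" using good_cauchy[OF g, of 1] by auto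
  define B where "B = (\<Sum>k<N. nrm K (s k)) + nrm K (s N) + 1"
  have "nrm K (s n) \<le> B" for n
  proof (cases "n < N")
    case True
    have "nrm K (s n) \<le> (\<Sum>k<N. nrm K (s k))"
      using True by (intro member_le_sum) (auto simp: nrm_nn)
    moreover have "0 \<le> nrm K (s N)" by (rule nrm_nn)
    ultimately show ?thesis unfolding B_def by linarith
  next
    case False
    have "nrm K (s n) \<le> nrm K (dl (s n) (s N)) + nrm K (dl (s N) [])"
      using nrm_dl3[of "s n" "s N" "[]"] good_lz[OF g] by (simp add: dl_def scl_def)
    also have "nrm K (dl (s N) []) = nrm K (s N)" by (simp add: dl_def scl_def)
    moreover have "nrm K (dl (s n) (s N)) < 1" using N False by simp
    ultimately have "nrm K (s n) \<le> 1 + nrm K (s N)" by linarith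
    moreover have "0 \<le> (\<Sum>k<N. nrm K (s k))" by (intro sum_nonneg) (simp add: nrm_nn)
    ultimately show ?thesis unfolding B_def by linarith
  qed
  moreover have "0 \<le> B" unfolding B_def by (intro add_nonneg_nonneg sum_nonneg) (auto simp: nrm_nn)
  ultimately show ?thesis by blast
qed

lemma good_zero_qf: assumes g: "good Z K s (\<lambda>_. 0)" shows "(\<lambda>n. bf K (s n) (s n)) \<longlonglongrightarrow> 0"
proof (rule LIMSEQ_I)
  fix e :: real assume e: "0 < e"
  obtain B where B0: "B \<ge> 0" and B: "\<And>n. nrm K (s n) \<le> B" using good_bounded[OF g] by blast
  define \<delta> where "\<delta> = e / (2 * (B + 1))"
  have d0: "\<delta> > 0" using e B0 by (simp add: \<delta>_def)
  obtain N where N: "\<forall>m\<ge>N. \<forall>n\<ge>N. nrm K (dl (s m) (s n)) < \<delta>" using good_cauchy[OF g d0] by auto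
  have hlim: "(\<lambda>n. bf K (s n) (s N)) \<longlonglongrightarrow> 0"
  proof -
    have "(\<lambda>n. sum_list (map (\<lambda>q. snd q * ev Z K (s n) (fst q)) (s N))) \<longlonglongrightarrow> sum_list (map (\<lambda>q. snd q * 0) (s N))"
      by (rule tendsto_sum_list_map) (intro tendsto_mult tendsto_const good_pt[OF g])
    moreover have "bf K (s n) (s N) = sum_list (map (\<lambda>q. snd q * ev Z K (s n) (fst q)) (s N))" for n
      using bf_ev[OF symK good_lz[OF g] good_lz[OF g]] .
    ultimately show ?thesis by (simp add: sum_list_zero')
  qed
  then obtain N1 where N1: "\<forall>n\<ge>N1. norm (bf K (s n) (s N) - 0) < e / 2"
    using LIMSEQ_iff[THEN iffD1, OF hlim] e by (meson half_gt_zero)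
  have "norm (bf K (s n) (s n) - 0) < e" if n: "n \<ge> max N N1" for n
  proof -
    have "bf K (s n) (s n) = bf K (s n) (dl (s n) (s N)) + bf K (s n) (s N)"
      by (simp add: dl_def)
    moreover have "\<bar>bf K (s n) (dl (s n) (s N))\<bar> \<le> B * \<delta>"
    proof -
      have "\<bar>bf K (s n) (dl (s n) (s N))\<bar> \<le> nrm K (s n) * nrm K (dl (s n) (s N))"
        using bf_CS good_lz[OF g] by simp
      also have "\<dots> \<le> B * \<delta>" using B[of n] N n nrm_nn B0
        by (intro mult_mono) (auto simp: less_imp_le)
      finally show ?thesis .
    qed
    moreover have "B * \<delta> < e / 2" using e B0 unfolding \<delta>_def by (simp add: field_simps)
    moreover have "\<bar>bf K (s n) (s N)\<bar> < e / 2" using N1 n by simp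
    moreover have "0 \<le> bf K (s n) (s n)" using qf_nn good_lz[OF g] by blast
    ultimately show ?thesis by simp
  qed
  then show "\<exists>no. \<forall>n\<ge>no. norm (bf K (s n) (s n) - 0) < e" by blast
qed

lemma good_diff0: assumes g: "good Z K s f" and g': "good Z K s' f"
  shows "(\<lambda>n. nrm K (dl (s n) (s' n))) \<longlonglongrightarrow> 0"
proof -
  have "good Z K (\<lambda>n. dl (s n) (s' n)) (\<lambda>_. 0)"
    unfolding good_def
  proof (intro conjI allI impI)
    fix n show "lz Z (dl (s n) (s' n))" using good_lz[OF g] good_lz[OF g'] by simp
  next
    fix e :: real assume e: "e > 0"
    obtain N1 where N1: "\<forall>m\<ge>N1. \<forall>n\<ge>N1. nrm K (dl (s m) (s n)) < e/2" using good_cauchy[OF g, of "e/2"] e by auto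
    obtain N2 where N2: "\<forall>m\<ge>N2. \<forall>n\<ge>N2. nrm K (dl (s' m) (s' n)) < e/2" using good_cauchy[OF g', of "e/2"] e by auto
    have "nrm K (dl (dl (s m) (s' m)) (dl (s n) (s' n))) < e" if "m \<ge> max N1 N2" "n \<ge> max N1 N2" for m n
    proof -
      have "nrm K (dl (dl (s m) (s' m)) (dl (s n) (s' n))) = nrm K (dl (dl (s m) (s n)) (dl (s' m) (s' n)))"
        using good_lz[OF g] good_lz[OF g'] by (intro nrm_evcong) (auto simp: dl_def)
      also have "\<dots> \<le> nrm K (dl (s m) (s n)) + nrm K (dl (s' m) (s' n))"
        using good_lz[OF g] good_lz[OF g'] by (intro nrm_dl) auto
      also have "\<dots> < e"
      proof -
        have "nrm K (dl (s m) (s n)) < e/2" using N1 that by simp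
        moreover have "nrm K (dl (s' m) (s' n)) < e/2" using N2 that by simp
        ultimately show ?thesis by linarith
      qed
      finally show ?thesis .
    qed
    then show "\<exists>N. \<forall>m\<ge>N. \<forall>n\<ge>N. nrm K (dl (dl (s m) (s' m)) (dl (s n) (s' n))) < e" by blast
  next
    fix y
    have "(\<lambda>n. ev Z K (s n) y - ev Z K (s' n) y) \<longlonglongrightarrow> f y - f y"
      by (intro tendsto_diff good_pt[OF g] good_pt[OF g'])
    then show "(\<lambda>n. ev Z K (dl (s n) (s' n)) y) \<longlonglongrightarrow> 0" by (simp add: dl_def)
  qed
  from good_zero_qf[OF this] have "(\<lambda>n. sqrt \<bar>bf K (dl (s n) (s' n)) (dl (s n) (s' n))\<bar>) \<longlonglongrightarrow> sqrt \<bar>0\<bar>"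
    by (intro tendsto_real_sqrt tendsto_rabs)
  then show ?thesis by (simp add: nrm_def)
qed

lemma bf_dl_split:
  "bf K a c - bf K b d = bf K (dl a b) c + bf K b (dl c d)"
  by (simp add: dl_def)

lemma good_bf_cauchy: assumes g: "good Z K s f" and h: "good Z K t g"
  shows "convergent (\<lambda>n. bf K (s n) (t n))"
proof -
  obtain B1 where B1: "B1 \<ge> 0" "\<And>n. nrm K (s n) \<le> B1" using good_bounded[OF g] by blast
  obtain B2 where B2: "B2 \<ge> 0" "\<And>n. nrm K (t n) \<le> B2" using good_bounded[OF h] by blast
  have "Cauchy (\<lambda>n. bf K (s n) (t n))"
  proof (rule CauchyI)
    fix e :: real assume e: "0 < e"
    define \<delta> where "\<delta> = e / (2 * (B1 + B2 + 1))"
    have d0: "\<delta> > 0" using e B1 B2 by (simp add: \<delta>_def)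
    obtain N1 where N1: "\<forall>m\<ge>N1. \<forall>n\<ge>N1. nrm K (dl (s m) (s n)) < \<delta>" using good_cauchy[OF g d0] by auto
    obtain N2 where N2: "\<forall>m\<ge>N2. \<forall>n\<ge>N2. nrm K (dl (t m) (t n)) < \<delta>" using good_cauchy[OF h d0] by auto
    have "norm (bf K (s m) (t m) - bf K (s n) (t n)) < e" if mn: "m \<ge> max N1 N2" "n \<ge> max N1 N2" for m n
    proof -
      have "\<bar>bf K (dl (s m) (s n)) (t m)\<bar> \<le> \<delta> * B2"
      proof -
        have "\<bar>bf K (dl (s m) (s n)) (t m)\<bar> \<le> nrm K (dl (s m) (s n)) * nrm K (t m)"
          using bf_CS good_lz[OF g] good_lz[OF h] by simp
        also have "\<dots> \<le> \<delta> * B2" using N1 mn B2 nrm_nn d0 by (intro mult_mono) (auto simp: less_imp_le)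
        finally show ?thesis .
      qed
      moreover have "\<bar>bf K (s n) (dl (t m) (t n))\<bar> \<le> B1 * \<delta>"
      proof -
        have "\<bar>bf K (s n) (dl (t m) (t n))\<bar> \<le> nrm K (s n) * nrm K (dl (t m) (t n))"
          using bf_CS good_lz[OF g] good_lz[OF h] by simp
        also have "\<dots> \<le> B1 * \<delta>" using N2 mn B1 nrm_nn d0 by (intro mult_mono) (auto simp: less_imp_le)
        finally show ?thesis .
      qed
      moreover have "\<delta> * B2 + B1 * \<delta> < e"
      proof -
        have "\<delta> * (B1 + B2 + 1) = e / 2" using B1 B2 unfolding \<delta>_def by (simp add: field_simps)
        moreover have "\<delta> * (B1 + B2) \<le> \<delta> * (B1 + B2 + 1)" using d0 by simp
        ultimately show ?thesis using e by (simp add: algebra_simps)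
      qed
      ultimately show ?thesis using bf_dl_split[of "s m" "t m" "s n" "t n"] by simp
    qed
    then show "\<exists>M. \<forall>m\<ge>M. \<forall>n\<ge>M. norm (bf K (s m) (t m) - bf K (s n) (t n)) < e" by blast
  qed
  then show ?thesis by (simp add: Cauchy_convergent_iff)
qed

lemma good_bf_diff0: assumes g: "good Z K s f" and g': "good Z K s' f" and h: "good Z K t g" and h': "good Z K t' g"
  shows "(\<lambda>n. bf K (s n) (t n) - bf K (s' n) (t' n)) \<longlonglongrightarrow> 0"
proof -
  obtain B1 where B1: "B1 \<ge> 0" "\<And>n. nrm K (s' n) \<le> B1" using good_bounded[OF g'] by blast
  obtain B2 where B2: "B2 \<ge> 0" "\<And>n. nrm K (t n) \<le> B2" using good_bounded[OF h] by blast
  have lim: "(\<lambda>n. nrm K (dl (s n) (s' n)) * B2 + B1 * nrm K (dl (t n) (t' n))) \<longlonglongrightarrow> 0 * B2 + B1 * 0"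
    by (intro tendsto_add tendsto_mult tendsto_const good_diff0[OF g g'] good_diff0[OF h h'])
  have "norm (bf K (s n) (t n) - bf K (s' n) (t' n)) \<le> nrm K (dl (s n) (s' n)) * B2 + B1 * nrm K (dl (t n) (t' n))" for n
  proof -
    have a: "\<bar>bf K (dl (s n) (s' n)) (t n)\<bar> \<le> nrm K (dl (s n) (s' n)) * B2"
    proof -
      have "\<bar>bf K (dl (s n) (s' n)) (t n)\<bar> \<le> nrm K (dl (s n) (s' n)) * nrm K (t n)"
        using bf_CS good_lz[OF g] good_lz[OF g'] good_lz[OF h] by simp
      also have "\<dots> \<le> nrm K (dl (s n) (s' n)) * B2" using B2 nrm_nn by (intro mult_left_mono) auto
      finally show ?thesis .
    qed
    have b: "\<bar>bf K (s' n) (dl (t n) (t' n))\<bar> \<le> B1 * nrm K (dl (t n) (t' n))"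
    proof -
      have "\<bar>bf K (s' n) (dl (t n) (t' n))\<bar> \<le> nrm K (s' n) * nrm K (dl (t n) (t' n))"
        using bf_CS good_lz[OF h] good_lz[OF g'] good_lz[OF h'] by simp
      also have "\<dots> \<le> B1 * nrm K (dl (t n) (t' n))" using B1 nrm_nn by (intro mult_right_mono) auto
      finally show ?thesis .
    qed
    show ?thesis using a b bf_dl_split[of "s n" "t n" "s' n" "t' n"] by simp
  qed
  then have ev: "\<forall>\<^sub>F n in sequentially. norm (bf K (s n) (t n) - bf K (s' n) (t' n)) \<le> nrm K (dl (s n) (s' n)) * B2 + B1 * nrm K (dl (t n) (t' n))"
    by (rule always_eventually[OF allI])
  show ?thesis using Lim_null_comparison[OF ev] lim by simp
qed

end


definition MAV :: "'z set \<Rightarrow> ('z \<Rightarrow> 'z \<Rightarrow> real) \<Rightarrow> ('z \<Rightarrow> real) set" where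
  "MAV Z K = {f. \<exists>s. good Z K s f}"
definition MAS :: "'z set \<Rightarrow> ('z \<Rightarrow> 'z \<Rightarrow> real) \<Rightarrow> ('z \<Rightarrow> real) \<Rightarrow> nat \<Rightarrow> ('z \<times> real) list" where
  "MAS Z K f = (SOME s. good Z K s f)"
definition MAip :: "'z set \<Rightarrow> ('z \<Rightarrow> 'z \<Rightarrow> real) \<Rightarrow> ('z \<Rightarrow> real) \<Rightarrow> ('z \<Rightarrow> real) \<Rightarrow> real" where
  "MAip Z K f g = lim (\<lambda>n. bf K (MAS Z K f n) (MAS Z K g n))"

lemma P_diff_swap:
  assumes P: "preh V ip" and a: "a \<in> V" and b: "b \<in> V"
  shows "ip (\<lambda>z. b z - a z) (\<lambda>z. b z - a z) = ip (\<lambda>z. a z - b z) (\<lambda>z. a z - b z)"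
proof -
  define d where "d = (\<lambda>z. a z - b z)"
  have d: "d \<in> V" unfolding d_def using P_diff[OF P a b] .
  have e: "(\<lambda>z. b z - a z) = (\<lambda>z. (-1) * d z)" by (auto simp: d_def)
  have "ip (\<lambda>z. (-1) * d z) (\<lambda>z. (-1) * d z) = (-1) * ip d (\<lambda>z. (-1) * d z)"
    by (rule P_ip_scale1[OF P d P_scale[OF P d]])
  also have "\<dots> = (-1) * ((-1) * ip d d)" by (subst P_ip_scale2[OF P d d]) (rule refl)
  finally show ?thesis unfolding e d_def[symmetric] by simp
qed

context
  fixes Z :: "'z set" and K
  assumes pd: "pdk Z K"
begin

lemma MAS_good: "f \<in> MAV Z K \<Longrightarrow> good Z K (MAS Z K f) f"
proof -
  assume "f \<in> MAV Z K"
  then obtain s where "good Z K s f" unfolding MAV_def by blast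
  then show ?thesis unfolding MAS_def by (rule someI[of "\<lambda>s. good Z K s f"])
qed

lemma MAV_I: "good Z K s f \<Longrightarrow> f \<in> MAV Z K" unfolding MAV_def by blast

lemma K12: assumes g: "good Z K s f" and h: "good Z K t g"
  shows "(\<lambda>n. bf K (s n) (t n)) \<longlonglongrightarrow> MAip Z K f g"
proof -
  have gf: "good Z K (MAS Z K f) f" using MAS_good MAV_I g by blast
  have gg: "good Z K (MAS Z K g) g" using MAS_good MAV_I h by blast
  have c: "(\<lambda>n. bf K (MAS Z K f n) (MAS Z K g n)) \<longlonglongrightarrow> MAip Z K f g"
    unfolding MAip_def using good_bf_cauchy[OF pd gf gg] by (simp add: convergent_LIMSEQ_iff)
  have "(\<lambda>n. (bf K (s n) (t n) - bf K (MAS Z K f n) (MAS Z K g n)) + bf K (MAS Z K f n) (MAS Z K g n)) \<longlonglongrightarrow> 0 + MAip Z K f g"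
    by (intro tendsto_add c good_bf_diff0[OF pd g gf h gg])
  then show ?thesis by simp
qed

lemma good_const: "lz Z l \<Longrightarrow> good Z K (\<lambda>_. l) (ev Z K l)"
  unfolding good_def
proof (intro conjI allI impI)
  fix e :: real assume l: "lz Z l" and e: "e > 0"
  have "nrm K (dl l l) = nrm K []" using l by (intro nrm_evcong[OF pd]) (auto simp: dl_def)
  then show "\<exists>N. \<forall>m\<ge>N. \<forall>n\<ge>N. nrm K (dl l l) < e" using e by (simp add: nrm_def)
qed auto

lemma MAip_ev: "lz Z l \<Longrightarrow> lz Z r \<Longrightarrow> MAip Z K (ev Z K l) (ev Z K r) = bf K l r"
  using K12[OF good_const good_const] LIMSEQ_unique[OF _ tendsto_const] by metis

lemma good_add: assumes g: "good Z K s f" and h: "good Z K t g"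
  shows "good Z K (\<lambda>n. s n @ t n) (\<lambda>z. f z + g z)"
  unfolding good_def
proof (intro conjI allI impI)
  fix n show "lz Z (s n @ t n)" using good_lz[OF pd g] good_lz[OF pd h] by simp
next
  fix e :: real assume e: "e > 0"
  obtain N1 where N1: "\<forall>m\<ge>N1. \<forall>n\<ge>N1. nrm K (dl (s m) (s n)) < e/2" using good_cauchy[OF pd g, of "e/2"] e by auto
  obtain N2 where N2: "\<forall>m\<ge>N2. \<forall>n\<ge>N2. nrm K (dl (t m) (t n)) < e/2" using good_cauchy[OF pd h, of "e/2"] e by auto
  have "nrm K (dl (s m @ t m) (s n @ t n)) < e" if "m \<ge> max N1 N2" "n \<ge> max N1 N2" for m n
  proof -
    have "nrm K (dl (s m @ t m) (s n @ t n)) = nrm K (dl (s m) (s n) @ dl (t m) (t n))"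
      using good_lz[OF pd g] good_lz[OF pd h] by (intro nrm_evcong[OF pd]) (auto simp: dl_def)
    also have "\<dots> \<le> nrm K (dl (s m) (s n)) + nrm K (dl (t m) (t n))"
      using good_lz[OF pd g] good_lz[OF pd h] by (intro nrm_tri[OF pd]) auto
    also have "\<dots> < e"
    proof -
      have "nrm K (dl (s m) (s n)) < e/2" using N1 that by simp
      moreover have "nrm K (dl (t m) (t n)) < e/2" using N2 that by simp
      ultimately show ?thesis by linarith
    qed
    finally show ?thesis .
  qed
  then show "\<exists>N. \<forall>m\<ge>N. \<forall>n\<ge>N. nrm K (dl (s m @ t m) (s n @ t n)) < e" by blast
next
  fix y
  show "(\<lambda>n. ev Z K (s n @ t n) y) \<longlonglongrightarrow> f y + g y"
    using tendsto_add[OF good_pt[OF pd g] good_pt[OF pd h]] by simp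
qed

lemma good_scale: assumes g: "good Z K s f"
  shows "good Z K (\<lambda>n. scl a (s n)) (\<lambda>z. a * f z)"
  unfolding good_def
proof (intro conjI allI impI)
  fix n show "lz Z (scl a (s n))" using good_lz[OF pd g] by simp
next
  fix e :: real assume e: "e > 0"
  have e': "e / (\<bar>a\<bar> + 1) > 0" using e by simp
  obtain N where N: "\<forall>m\<ge>N. \<forall>n\<ge>N. nrm K (dl (s m) (s n)) < e / (\<bar>a\<bar> + 1)" using good_cauchy[OF pd g e'] by auto
  have "nrm K (dl (scl a (s m)) (scl a (s n))) < e" if "m \<ge> N" "n \<ge> N" for m n
  proof -
    have "nrm K (dl (scl a (s m)) (scl a (s n))) = nrm K (scl a (dl (s m) (s n)))"
      using good_lz[OF pd g] by (intro nrm_evcong[OF pd]) (auto simp: dl_def algebra_simps)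
    also have "\<dots> = \<bar>a\<bar> * nrm K (dl (s m) (s n))" by (rule nrm_scl[OF pd])
    also have "\<dots> \<le> \<bar>a\<bar> * (e / (\<bar>a\<bar> + 1))" using N that by (intro mult_left_mono) (auto simp: less_imp_le)
    also have "\<dots> < e" using e by (simp add: field_simps)
    finally show ?thesis .
  qed
  then show "\<exists>N. \<forall>m\<ge>N. \<forall>n\<ge>N. nrm K (dl (scl a (s m)) (scl a (s n))) < e" by blast
next
  fix y
  show "(\<lambda>n. ev Z K (scl a (s n)) y) \<longlonglongrightarrow> a * f y"
    using tendsto_mult[OF tendsto_const good_pt[OF pd g]] by simp
qed

lemma MA_preh: "preh (MAV Z K) (MAip Z K)"
  unfolding preh_def
proof (intro conjI ballI allI)
  have "good Z K (\<lambda>_. []) (ev Z K [])" using good_const by simp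
  moreover have "ev Z K [] = (\<lambda>_. 0)" by (auto simp: ev_def)
  ultimately show "(\<lambda>_. 0) \<in> MAV Z K" using MAV_I by metis
next
  fix f g assume "f \<in> MAV Z K" "g \<in> MAV Z K"
  then show "(\<lambda>z. f z + g z) \<in> MAV Z K" using good_add MAS_good MAV_I by blast
next
  fix f a assume "f \<in> MAV Z K"
  then show "(\<lambda>z. a * f z) \<in> MAV Z K" using good_scale MAS_good MAV_I by blast
next
  fix f g h assume f: "f \<in> MAV Z K" and g: "g \<in> MAV Z K" and h: "h \<in> MAV Z K"
  note gf = MAS_good[OF f] and gg = MAS_good[OF g] and gh = MAS_good[OF h]
  have "(\<lambda>n. bf K (MAS Z K f n @ MAS Z K g n) (MAS Z K h n)) \<longlonglongrightarrow> MAip Z K (\<lambda>z. f z + g z) h"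
    by (rule K12[OF good_add[OF gf gg] gh])
  moreover have "(\<lambda>n. bf K (MAS Z K f n @ MAS Z K g n) (MAS Z K h n)) \<longlonglongrightarrow> MAip Z K f h + MAip Z K g h"
    using tendsto_add[OF K12[OF gf gh] K12[OF gg gh]] by simp
  ultimately show "MAip Z K (\<lambda>z. f z + g z) h = MAip Z K f h + MAip Z K g h" by (rule LIMSEQ_unique)
next
  fix f g a assume f: "f \<in> MAV Z K" and g: "g \<in> MAV Z K"
  note gf = MAS_good[OF f] and gg = MAS_good[OF g]
  have "(\<lambda>n. bf K (scl a (MAS Z K f n)) (MAS Z K g n)) \<longlonglongrightarrow> MAip Z K (\<lambda>z. a * f z) g"
    by (rule K12[OF good_scale[OF gf] gg])
  moreover have "(\<lambda>n. bf K (scl a (MAS Z K f n)) (MAS Z K g n)) \<longlonglongrightarrow> a * MAip Z K f g"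
    using tendsto_mult[OF tendsto_const K12[OF gf gg]] by simp
  ultimately show "MAip Z K (\<lambda>z. a * f z) g = a * MAip Z K f g" by (rule LIMSEQ_unique)
next
  fix f g assume f: "f \<in> MAV Z K" and g: "g \<in> MAV Z K"
  note gf = MAS_good[OF f] and gg = MAS_good[OF g]
  have "(\<lambda>n. bf K (MAS Z K f n) (MAS Z K g n)) \<longlonglongrightarrow> MAip Z K g f"
    using K12[OF gg gf] bf_sym[OF symK[OF pd] good_lz[OF pd gg] good_lz[OF pd gf]] by simp
  then show "MAip Z K f g = MAip Z K g f" using K12[OF gf gg] LIMSEQ_unique by blast
next
  fix f assume f: "f \<in> MAV Z K"
  note gf = MAS_good[OF f]
  show "0 \<le> MAip Z K f f"
    using K12[OF gf gf] qf_nn[OF pd good_lz[OF pd gf]] by (intro LIMSEQ_le_const) auto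
qed


lemma MA_vanish: "f \<in> MAV Z K \<Longrightarrow> z \<notin> Z \<Longrightarrow> f z = 0"
proof -
  assume f: "f \<in> MAV Z K" and z: "z \<notin> Z"
  have "(\<lambda>n. ev Z K (MAS Z K f n) z) \<longlonglongrightarrow> f z" using good_pt[OF pd MAS_good[OF f]] .
  moreover have "(\<lambda>n. ev Z K (MAS Z K f n) z) = (\<lambda>n. 0)" using ev_out[OF z] by auto
  ultimately show ?thesis using LIMSEQ_unique tendsto_const by metis
qed

lemma MA_posdef: "f \<in> MAV Z K \<Longrightarrow> MAip Z K f f = 0 \<Longrightarrow> f = (\<lambda>_. 0)"
proof
  fix y assume f: "f \<in> MAV Z K" and z: "MAip Z K f f = 0"
  note gf = MAS_good[OF f]
  show "f y = 0"
  proof (cases "y \<in> Z")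
    case False then show ?thesis using MA_vanish f by blast
  next
    case y: True
    have "(\<lambda>n. sqrt (bf K (MAS Z K f n) (MAS Z K f n)) * sqrt (K y y)) \<longlonglongrightarrow> sqrt 0 * sqrt (K y y)"
      using K12[OF gf gf] z by (intro tendsto_mult tendsto_real_sqrt tendsto_const) auto
    then have l0: "(\<lambda>n. nrm K (MAS Z K f n) * sqrt (K y y)) \<longlonglongrightarrow> 0"
      using nrm_alt[OF pd good_lz[OF pd gf]] by simp
    have "\<forall>\<^sub>F n in sequentially. norm (ev Z K (MAS Z K f n) y) \<le> nrm K (MAS Z K f n) * sqrt (K y y)"
      using ev_bound[OF pd good_lz[OF pd gf] y] by (intro always_eventually allI) simp
    from Lim_null_comparison[OF this l0] have "(\<lambda>n. ev Z K (MAS Z K f n) y) \<longlonglongrightarrow> 0" .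
    then show ?thesis using good_pt[OF pd gf] LIMSEQ_unique by blast
  qed
qed

lemma MA_repr: "x \<in> Z \<Longrightarrow> ksec Z K x \<in> MAV Z K \<and> (\<forall>f\<in>MAV Z K. MAip Z K f (ksec Z K x) = f x)"
proof -
  assume x: "x \<in> Z"
  have g1: "good Z K (\<lambda>_. [(x,1)]) (ksec Z K x)" using good_const[of "[(x,1)]"] x by (simp add: ev_single)
  have "MAip Z K f (ksec Z K x) = f x" if f: "f \<in> MAV Z K" for f
  proof -
    note gf = MAS_good[OF f]
    have "(\<lambda>n. bf K (MAS Z K f n) [(x,1)]) \<longlonglongrightarrow> MAip Z K f (ksec Z K x)" by (rule K12[OF gf g1])
    moreover have "bf K (MAS Z K f n) [(x,1)] = ev Z K (MAS Z K f n) x" for n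
      using bf_single_right[OF symK[OF pd] good_lz[OF pd gf, of n] x, of 1] by simp
    ultimately have "(\<lambda>n. ev Z K (MAS Z K f n) x) \<longlonglongrightarrow> MAip Z K f (ksec Z K x)" by simp
    then show ?thesis using good_pt[OF pd gf, of x] LIMSEQ_unique by blast
  qed
  then show ?thesis using g1 MAV_I by blast
qed

lemma MA_K3: assumes g: "good Z K s f" and e: "e > 0"
  shows "\<exists>N. \<forall>M\<ge>N. MAip Z K (\<lambda>z. f z - ev Z K (s M) z) (\<lambda>z. f z - ev Z K (s M) z) \<le> e"
proof -
  obtain N where N: "\<forall>m\<ge>N. \<forall>n\<ge>N. nrm K (dl (s m) (s n)) < sqrt e" using good_cauchy[OF pd g, of "sqrt e"] e by auto
  have "MAip Z K (\<lambda>z. f z - ev Z K (s M) z) (\<lambda>z. f z - ev Z K (s M) z) \<le> e" if M: "M \<ge> N" for M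
  proof -
    have gd: "good Z K (\<lambda>n. dl (s n) (s M)) (\<lambda>z. f z - ev Z K (s M) z)"
      unfolding good_def
    proof (intro conjI allI impI)
      fix n show "lz Z (dl (s n) (s M))" using good_lz[OF pd g] by simp
    next
      fix e' :: real assume e': "e' > 0"
      obtain N' where N': "\<forall>m\<ge>N'. \<forall>n\<ge>N'. nrm K (dl (s m) (s n)) < e'" using good_cauchy[OF pd g e'] by auto
      have "nrm K (dl (dl (s m) (s M)) (dl (s n) (s M))) = nrm K (dl (s m) (s n))" for m n
        using good_lz[OF pd g] by (intro nrm_evcong[OF pd]) (auto simp: dl_def)
      then show "\<exists>N. \<forall>m\<ge>N. \<forall>n\<ge>N. nrm K (dl (dl (s m) (s M)) (dl (s n) (s M))) < e'" using N' by auto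
    next
      fix y show "(\<lambda>n. ev Z K (dl (s n) (s M)) y) \<longlonglongrightarrow> f y - ev Z K (s M) y"
        using tendsto_diff[OF good_pt[OF pd g] tendsto_const] by (simp add: dl_def)
    qed
    have lim: "(\<lambda>n. bf K (dl (s n) (s M)) (dl (s n) (s M))) \<longlonglongrightarrow> MAip Z K (\<lambda>z. f z - ev Z K (s M) z) (\<lambda>z. f z - ev Z K (s M) z)"
      by (rule K12[OF gd gd])
    have "bf K (dl (s n) (s M)) (dl (s n) (s M)) \<le> e" if n: "n \<ge> N" for n
    proof -
      have "nrm K (dl (s n) (s M)) < sqrt e" using N n M by simp
      then have "(nrm K (dl (s n) (s M)))\<^sup>2 \<le> (sqrt e)\<^sup>2"
        using nrm_nn[OF pd] by (intro power_mono) (auto simp: less_imp_le)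
      then show ?thesis using nrm_sq[OF pd, of "dl (s n) (s M)"] good_lz[OF pd g] e by simp
    qed
    then show ?thesis using LIMSEQ_le_const2[OF lim] by blast
  qed
  then show ?thesis by blast
qed

lemma MA_complete:
  assumes sV: "\<forall>n. \<sigma> n \<in> MAV Z K"
    and cau: "\<forall>e>0. \<exists>N. \<forall>m\<ge>N. \<forall>n\<ge>N. MAip Z K (\<lambda>z. \<sigma> m z - \<sigma> n z) (\<lambda>z. \<sigma> m z - \<sigma> n z) < e"
  shows "\<exists>g\<in>MAV Z K. (\<lambda>n. MAip Z K (\<lambda>z. \<sigma> n z - g z) (\<lambda>z. \<sigma> n z - g z)) \<longlonglongrightarrow> 0"
proof -
  note P = MA_preh
  let ?ip = "MAip Z K"
  define nd where "nd a b = sqrt (?ip (\<lambda>z. a z - b z) (\<lambda>z. a z - b z))" for a b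
  have "\<forall>k. \<exists>M. ?ip (\<lambda>z. \<sigma> k z - ev Z K (MAS Z K (\<sigma> k) M) z) (\<lambda>z. \<sigma> k z - ev Z K (MAS Z K (\<sigma> k) M) z) \<le> (inverse (real (Suc k)))\<^sup>2"
  proof
    fix k
    obtain N where "\<forall>M\<ge>N. ?ip (\<lambda>z. \<sigma> k z - ev Z K (MAS Z K (\<sigma> k) M) z) (\<lambda>z. \<sigma> k z - ev Z K (MAS Z K (\<sigma> k) M) z) \<le> (inverse (real (Suc k)))\<^sup>2"
      using MA_K3[OF MAS_good[OF sV[rule_format, of k]], of "(inverse (real (Suc k)))\<^sup>2"] by auto
    then show "\<exists>M. ?ip (\<lambda>z. \<sigma> k z - ev Z K (MAS Z K (\<sigma> k) M) z) (\<lambda>z. \<sigma> k z - ev Z K (MAS Z K (\<sigma> k) M) z) \<le> (inverse (real (Suc k)))\<^sup>2"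
      by blast
  qed
  then obtain Mk where Mk: "\<And>k. ?ip (\<lambda>z. \<sigma> k z - ev Z K (MAS Z K (\<sigma> k) (Mk k)) z) (\<lambda>z. \<sigma> k z - ev Z K (MAS Z K (\<sigma> k) (Mk k)) z) \<le> (inverse (real (Suc k)))\<^sup>2"
    by metis
  define r where "r k = MAS Z K (\<sigma> k) (Mk k)" for k
  define \<rho> where "\<rho> k = ev Z K (r k)" for k
  have rz: "lz Z (r k)" for k unfolding r_def using good_lz[OF pd MAS_good[OF sV[rule_format, of k]]] .
  have \<rho>V: "\<rho> k \<in> MAV Z K" for k unfolding \<rho>_def using MAV_I[OF good_const[OF rz]] .
  have nd_nn: "0 \<le> nd a b" if "a \<in> MAV Z K" "b \<in> MAV Z K" for a b unfolding nd_def
    using P_nonneg[OF P P_diff[OF P that]] by simp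
  have tri: "nd a c \<le> nd a b + nd b c" if "a \<in> MAV Z K" "b \<in> MAV Z K" "c \<in> MAV Z K" for a b c
    unfolding nd_def using P_tri3[OF P that] .
  have swap: "nd a b = nd b a" if "a \<in> MAV Z K" "b \<in> MAV Z K" for a b
    unfolding nd_def using P_diff_swap[OF P that] by simp
  have close: "nd (\<sigma> k) (\<rho> k) \<le> inverse (real (Suc k))" for k
  proof -
    have "nd (\<sigma> k) (\<rho> k) \<le> sqrt ((inverse (real (Suc k)))\<^sup>2)"
      unfolding nd_def \<rho>_def r_def by (rule real_sqrt_le_mono[OF Mk])
    then show ?thesis by simp
  qed
  have ndr: "nd (\<rho> j) (\<rho> k) = nrm K (dl (r j) (r k))" for j k
  proof -
    have "(\<lambda>z. \<rho> j z - \<rho> k z) = ev Z K (dl (r j) (r k))" unfolding \<rho>_def by (auto simp: dl_def)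
    then show ?thesis unfolding nd_def using MAip_ev rz nrm_alt[OF pd] by simp
  qed
  have rcau: "\<forall>e>0. \<exists>N. \<forall>m\<ge>N. \<forall>n\<ge>N. nrm K (dl (r m) (r n)) < e"
  proof (intro allI impI)
    fix e :: real assume e: "e > 0"
    obtain N1 where N1: "\<forall>n\<ge>N1. inverse (real (Suc n)) < e / 3" using eps_bound[of "e/3"] e by auto
    obtain N2 where N2: "\<forall>m\<ge>N2. \<forall>n\<ge>N2. ?ip (\<lambda>z. \<sigma> m z - \<sigma> n z) (\<lambda>z. \<sigma> m z - \<sigma> n z) < (e/3)\<^sup>2"
    proof -
      have "(e/3)\<^sup>2 > 0" using e by simp
      then show ?thesis using cau that by blast
    qed
    have "nrm K (dl (r m) (r n)) < e" if mn: "m \<ge> max N1 N2" "n \<ge> max N1 N2" for m n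
    proof -
      have "nrm K (dl (r m) (r n)) = nd (\<rho> m) (\<rho> n)" using ndr by simp
      also have "\<dots> \<le> nd (\<rho> m) (\<sigma> m) + nd (\<sigma> m) (\<rho> n)" using tri \<rho>V sV by blast
      also have "\<dots> \<le> nd (\<rho> m) (\<sigma> m) + (nd (\<sigma> m) (\<sigma> n) + nd (\<sigma> n) (\<rho> n))" using tri \<rho>V sV
        by (simp add: add_left_mono)
      also have "nd (\<rho> m) (\<sigma> m) = nd (\<sigma> m) (\<rho> m)" using swap \<rho>V sV by blast
      also have "nd (\<sigma> m) (\<sigma> n) < e / 3"
      proof -
        have "?ip (\<lambda>z. \<sigma> m z - \<sigma> n z) (\<lambda>z. \<sigma> m z - \<sigma> n z) < (e/3)\<^sup>2" using N2 mn by simp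
        then have "nd (\<sigma> m) (\<sigma> n) < sqrt ((e/3)\<^sup>2)" unfolding nd_def by (rule real_sqrt_less_mono)
        then show ?thesis using e by simp
      qed
      moreover have "nd (\<sigma> m) (\<rho> m) < e / 3" using close[of m] N1 mn by (meson max.boundedE order.strict_trans1)
      moreover have "nd (\<sigma> n) (\<rho> n) < e / 3" using close[of n] N1 mn by (meson max.boundedE order.strict_trans1)
      ultimately show ?thesis by simp
    qed
    then show "\<exists>N. \<forall>m\<ge>N. \<forall>n\<ge>N. nrm K (dl (r m) (r n)) < e" by blast
  qed
  have ptc: "convergent (\<lambda>k. ev Z K (r k) y)" for y
  proof (cases "y \<in> Z")
    case False
    then have "(\<lambda>k. ev Z K (r k) y) = (\<lambda>k. 0)" by (intro ext ev_out)
    then show ?thesis by (simp add: convergent_const)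
  next
    case y: True
    have "Cauchy (\<lambda>k. ev Z K (r k) y)"
    proof (rule CauchyI)
      fix e :: real assume e: "0 < e"
      have Kyy: "0 \<le> K y y" using qf_nn[OF pd, of "[(y,1)]"] y by (simp add: bf_def)
      have e': "e / (sqrt (K y y) + 1) > 0" using e Kyy real_sqrt_ge_zero[OF Kyy] by (intro divide_pos_pos) linarith+
      obtain N where N: "\<forall>m\<ge>N. \<forall>n\<ge>N. nrm K (dl (r m) (r n)) < e / (sqrt (K y y) + 1)"
        using rcau e' by blast
      have "norm (ev Z K (r m) y - ev Z K (r n) y) < e" if "m \<ge> N" "n \<ge> N" for m n
      proof -
        have "norm (ev Z K (r m) y - ev Z K (r n) y) = \<bar>ev Z K (dl (r m) (r n)) y\<bar>" by (simp add: dl_def)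
        also have "\<dots> \<le> nrm K (dl (r m) (r n)) * sqrt (K y y)" using ev_bound[OF pd _ y] rz by simp
        also have "\<dots> \<le> (e / (sqrt (K y y) + 1)) * sqrt (K y y)"
          using N that Kyy by (intro mult_right_mono) (auto simp: less_imp_le)
        also have "\<dots> < e"
        proof -
          have q: "0 \<le> sqrt (K y y)" using Kyy by simp
          have "sqrt (K y y) / (sqrt (K y y) + 1) < 1" using q by (subst divide_less_eq_1_pos) linarith+
          then have "e * (sqrt (K y y) / (sqrt (K y y) + 1)) < e * 1" using e by (intro mult_strict_left_mono)
          then show ?thesis by simp
        qed
        finally show ?thesis .
      qed
      then show "\<exists>M. \<forall>m\<ge>M. \<forall>n\<ge>M. norm (ev Z K (r m) y - ev Z K (r n) y) < e" by blast
    qed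
    then show ?thesis by (simp add: Cauchy_convergent_iff)
  qed
  define g where "g y = lim (\<lambda>k. ev Z K (r k) y)" for y
  have gr: "good Z K r g" unfolding good_def
    using rz rcau ptc by (auto simp: g_def convergent_LIMSEQ_iff)
  have gV: "g \<in> MAV Z K" using MAV_I[OF gr] .
  have tail: "(\<lambda>k. ?ip (\<lambda>z. g z - \<rho> k z) (\<lambda>z. g z - \<rho> k z)) \<longlonglongrightarrow> 0"
  proof (rule LIMSEQ_I)
    fix e :: real assume e: "0 < e"
    obtain N where N: "\<forall>M\<ge>N. ?ip (\<lambda>z. g z - ev Z K (r M) z) (\<lambda>z. g z - ev Z K (r M) z) \<le> e/2"
      using MA_K3[OF gr, of "e/2"] e by auto
    have "norm (?ip (\<lambda>z. g z - \<rho> k z) (\<lambda>z. g z - \<rho> k z) - 0) < e" if "k \<ge> N" for k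
    proof -
      have "0 \<le> ?ip (\<lambda>z. g z - \<rho> k z) (\<lambda>z. g z - \<rho> k z)" using P_nonneg[OF P P_diff[OF P gV \<rho>V]] .
      then show ?thesis using N that e unfolding \<rho>_def by force
    qed
    then show "\<exists>no. \<forall>k\<ge>no. norm (?ip (\<lambda>z. g z - \<rho> k z) (\<lambda>z. g z - \<rho> k z) - 0) < e" by blast
  qed
  have ub0: "(\<lambda>k. (inverse (real (Suc k)) + nd g (\<rho> k))\<^sup>2) \<longlonglongrightarrow> (0 + sqrt 0)\<^sup>2"
    unfolding nd_def by (intro tendsto_power tendsto_add LIMSEQ_inverse_real_of_nat tendsto_real_sqrt tail)
  have ub: "(\<lambda>k. (inverse (real (Suc k)) + nd g (\<rho> k))\<^sup>2) \<longlonglongrightarrow> 0"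
    using ub0 by (simp only: real_sqrt_zero add_0_left power_zero_numeral)
  have "(\<lambda>k. ?ip (\<lambda>z. \<sigma> k z - g z) (\<lambda>z. \<sigma> k z - g z)) \<longlonglongrightarrow> 0"
  proof (rule tendsto_sandwich[OF _ _ tendsto_const ub])
    show "\<forall>\<^sub>F k in sequentially. 0 \<le> ?ip (\<lambda>z. \<sigma> k z - g z) (\<lambda>z. \<sigma> k z - g z)"
      using P_nonneg[OF P P_diff[OF P _ gV]] sV by (intro always_eventually allI) blast
    have "?ip (\<lambda>z. \<sigma> k z - g z) (\<lambda>z. \<sigma> k z - g z) \<le> (inverse (real (Suc k)) + nd g (\<rho> k))\<^sup>2" for k
    proof -
      have "nd (\<sigma> k) g \<le> nd (\<sigma> k) (\<rho> k) + nd (\<rho> k) g" using tri sV \<rho>V gV by blast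
      also have "nd (\<rho> k) g = nd g (\<rho> k)" using swap \<rho>V gV by blast
      finally have "nd (\<sigma> k) g \<le> inverse (real (Suc k)) + nd g (\<rho> k)" using close[of k] by linarith
      then have "(nd (\<sigma> k) g)\<^sup>2 \<le> (inverse (real (Suc k)) + nd g (\<rho> k))\<^sup>2"
        using nd_nn sV gV by (intro power_mono) auto
      moreover have "(nd (\<sigma> k) g)\<^sup>2 = ?ip (\<lambda>z. \<sigma> k z - g z) (\<lambda>z. \<sigma> k z - g z)"
        unfolding nd_def using P_nonneg[OF P P_diff[OF P _ gV]] sV by simp
      ultimately show ?thesis by simp
    qed
    then show "\<forall>\<^sub>F k in sequentially. ?ip (\<lambda>z. \<sigma> k z - g z) (\<lambda>z. \<sigma> k z - g z) \<le> (inverse (real (Suc k)) + nd g (\<rho> k))\<^sup>2"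
      by (intro always_eventually allI)
  qed
  then show ?thesis using gV by blast
qed

theorem MA_rkhs: "is_rkhs Z K (MAV Z K) (MAip Z K)"
proof -
  have P: "preh (MAV Z K) (MAip Z K)" by (rule MA_preh)
  have p: "(\<lambda>_. 0) \<in> MAV Z K \<and>
     (\<forall>f\<in>MAV Z K. \<forall>g\<in>MAV Z K. (\<lambda>z. f z + g z) \<in> MAV Z K) \<and>
     (\<forall>f\<in>MAV Z K. \<forall>a::real. (\<lambda>z. a * f z) \<in> MAV Z K) \<and>
     (\<forall>f\<in>MAV Z K. \<forall>g\<in>MAV Z K. \<forall>h\<in>MAV Z K. MAip Z K (\<lambda>z. f z + g z) h = MAip Z K f h + MAip Z K g h) \<and>
     (\<forall>f\<in>MAV Z K. \<forall>g\<in>MAV Z K. \<forall>a::real. MAip Z K (\<lambda>z. a * f z) g = a * MAip Z K f g) \<and>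
     (\<forall>f\<in>MAV Z K. \<forall>g\<in>MAV Z K. MAip Z K f g = MAip Z K g f) \<and>
     (\<forall>f\<in>MAV Z K. MAip Z K f f \<ge> 0)" using P unfolding preh_def .
  have c1: "MAV Z K \<subseteq> {f. \<forall>z. z \<notin> Z \<longrightarrow> f z = 0}" using MA_vanish by blast
  have c2: "\<forall>f\<in>MAV Z K. MAip Z K f f \<ge> 0 \<and> (MAip Z K f f = 0 \<longrightarrow> f = (\<lambda>_. 0))"
    using p MA_posdef by blast
  have c3: "\<forall>s::nat \<Rightarrow> 'z \<Rightarrow> real. (\<forall>n. s n \<in> MAV Z K) \<and>
        (\<forall>e>0. \<exists>N. \<forall>m\<ge>N. \<forall>n\<ge>N. MAip Z K (\<lambda>z. s m z - s n z) (\<lambda>z. s m z - s n z) < e)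
        \<longrightarrow> (\<exists>g\<in>MAV Z K. (\<lambda>n. MAip Z K (\<lambda>z. s n z - g z) (\<lambda>z. s n z - g z)) \<longlonglongrightarrow> 0)"
    using MA_complete by blast
  have c4: "\<forall>x\<in>Z. ksec Z K x \<in> MAV Z K \<and> (\<forall>f\<in>MAV Z K. MAip Z K f (ksec Z K x) = f x)"
    using MA_repr by blast
  show ?thesis unfolding is_rkhs_def using p c1 c2 c3 c4 by blast
qed

end


lemma pdk_coord:
  assumes pd: "pdk D m" and j: "j \<in> {1..d}"
  shows "pdk (cube D d) (\<lambda>x y. m (x j) (y j))"
  unfolding pdk_def
proof (intro conjI ballI allI impI)
  have xj: "x \<in> cube D d \<Longrightarrow> x j \<in> D" for x using j by (auto simp: cube_def PiE_iff)
  fix x y assume "x \<in> cube D d" "y \<in> cube D d"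
  then show "m (x j) (y j) = m (y j) (x j)" using pdk_sym[OF pd] xj by blast
next
  have xj: "x \<in> cube D d \<Longrightarrow> x j \<in> D" for x using j by (auto simp: cube_def PiE_iff)
  fix l assume l: "lz (cube D d) l"
  define l' where "l' = map (\<lambda>p. (fst p j, snd p)) l"
  have "lz D l'" using l xj by (auto simp: lz_def l'_def)
  then have "0 \<le> bf m l' l'" using pdk_nonneg[OF pd] by blast
  moreover have "bf m l' l' = bf (\<lambda>x y. m (x j) (y j)) l l" unfolding l'_def bf_def by (simp add: o_def)
  ultimately show "0 \<le> bf (\<lambda>x y. m (x j) (y j)) l l" by simp
qed

lemma rk_exists: "reproducing_kernel Z K \<Longrightarrow> \<exists>V ip. is_rkhs Z K V ip"
  by (simp add: reproducing_kernel_def)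

lemma embed_pdk:
  assumes Rm: "is_rkhs D m Vm ipm" and R1: "is_rkhs D k1 V1 ip1"
    and sub: "Vm \<subseteq> V1" and C: "C > 0"
    and bnd: "\<forall>f\<in>Vm. sqrt (ipm f f) \<le> 1 \<longrightarrow> sqrt (ip1 f f) \<le> C"
  shows "pdk D (\<lambda>x y. C\<^sup>2 * k1 x y - m x y)"
  unfolding pdk_def
proof (intro conjI ballI allI impI)
  fix x y assume "x \<in> D" "y \<in> D"
  then show "C\<^sup>2 * k1 x y - m x y = C\<^sup>2 * k1 y x - m y x" using R_symK[OF Rm] R_symK[OF R1] by simp
next
  fix l assume l: "lz D l"
  note Pm = R_preh[OF Rm] and P1 = R_preh[OF R1]
  define h where "h = ev D m l"
  have hV: "h \<in> Vm" unfolding h_def using R_ev[OF Rm l] .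
  have hh: "ipm h h = bf m l l" unfolding h_def using R_ip_ev_ev[OF Rm l l] .
  have q1: "0 \<le> bf k1 l l" using pdk_nonneg[OF R_pdk[OF R1] l] .
  have "bf m l l \<le> C\<^sup>2 * bf k1 l l"
  proof (cases "bf m l l = 0")
    case True then show ?thesis using q1 by simp
  next
    case False
    then have pos: "bf m l l > 0" using pdk_nonneg[OF R_pdk[OF Rm] l] by simp
    define N where "N = sqrt (bf m l l)"
    have N0: "N > 0" using pos by (simp add: N_def)
    have NN: "N * N = bf m l l" using pos by (simp add: N_def)
    define h' where "h' = (\<lambda>z. inverse N * h z)"
    have h'V: "h' \<in> Vm" unfolding h'_def using P_scale[OF Pm hV] .
    have "ipm h' h' = inverse N * (inverse N * ipm h h)"
      unfolding h'_def using P_ip_scale1[OF Pm hV P_scale[OF Pm hV]] P_ip_scale2[OF Pm hV hV] by simp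
    also have "\<dots> = 1" using hh NN N0 pos by (simp add: field_simps)
    finally have "sqrt (ip1 h' h') \<le> C" using bnd h'V by simp
    moreover have h'1: "h' \<in> V1" using h'V sub by blast
    moreover have hN: "h = (\<lambda>z. N * h' z)" unfolding h'_def using N0 by auto
    have h1: "h \<in> V1" unfolding hN using P_scale[OF P1 h'1] .
    have "ip1 h h = N * (N * ip1 h' h')"
      unfolding hN using P_ip_scale1[OF P1 h'1 P_scale[OF P1 h'1]] P_ip_scale2[OF P1 h'1 h'1] by simp
    then have "sqrt (ip1 h h) = N * sqrt (ip1 h' h')"
      using N0 by (simp add: real_sqrt_mult)
    ultimately have hb: "sqrt (ip1 h h) \<le> N * C" using N0 by (simp add: mult_left_mono)
    have "bf m l l = lin h l" using R_ip_ev[OF Rm l hV] hh unfolding h_def by simp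
    also have "lin h l = ip1 (ev D k1 l) h" using R_ip_ev[OF R1 l h1] by simp
    also have "\<dots> \<le> \<bar>ip1 (ev D k1 l) h\<bar>" by simp
    also have "\<dots> \<le> sqrt (ip1 (ev D k1 l) (ev D k1 l)) * sqrt (ip1 h h)"
      using P_CS'[OF P1 R_ev[OF R1 l] h1] .
    also have "\<dots> \<le> sqrt (bf k1 l l) * (N * C)"
      using R_ip_ev_ev[OF R1 l l] hb q1 by (simp add: mult_left_mono)
    finally have "N * N \<le> N * (C * sqrt (bf k1 l l))" using NN by (simp add: algebra_simps)
    then have "N \<le> C * sqrt (bf k1 l l)" using N0 by simp
    then have "N\<^sup>2 \<le> (C * sqrt (bf k1 l l))\<^sup>2" using N0 by (intro power_mono) auto
    moreover have "(C * sqrt (bf k1 l l))\<^sup>2 = C\<^sup>2 * bf k1 l l" using q1 by (simp add: power_mult_distrib)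
    moreover have "N\<^sup>2 = bf m l l" using NN by (simp add: power2_eq_square)
    ultimately show ?thesis by simp
  qed
  then show "0 \<le> bf (\<lambda>x y. C\<^sup>2 * k1 x y - m x y) l l" by (simp add: bf_kdiff bf_kscale)
qed


lemma prod_one_plus:
  fixes g :: "nat \<Rightarrow> real"
  assumes "finite u"
  shows "(\<Prod>j\<in>u. 1 + g j) = (\<Sum>w\<in>Pow u. \<Prod>j\<in>w. g j)"
proof -
  have "(\<Prod>j\<in>u. 1 + g j) = (\<Prod>j\<in>u. g j + 1)" by (simp add: add.commute)
  also have "\<dots> = (\<Sum>w\<in>Pow u. (\<Prod>j\<in>w. g j) * (\<Prod>j\<in>u-w. 1))" by (rule prod_add[OF assms])
  finally show ?thesis by simp
qed

lemma kernel_identity: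
  "weighted_kernel d (T_up d C \<eta>) m_up x y =
     (\<Sum>u\<in>Pow {1..d}. \<eta> u * (C ^ (2 * card u) * (\<Prod>j\<in>u. 1 + m_up (x j) (y j))))"
proof -
  let ?P = "Pow {1..d::nat}"
  let ?pk = "\<lambda>w. prod_kernel m_up w x y"
  have "weighted_kernel d (T_up d C \<eta>) m_up x y
      = (\<Sum>w\<in>?P. (\<Sum>v\<in>{v. v \<in> ?P \<and> w \<subseteq> v}. C ^ (2 * card v) * \<eta> v) * ?pk w)"
    unfolding weighted_kernel_def T_up_def
    by (intro sum.cong refl arg_cong2[where f="(*)"] arg_cong[where f="\<lambda>A. sum _ A"]) auto
  also have "\<dots> = (\<Sum>w\<in>?P. \<Sum>v\<in>{v. v \<in> ?P \<and> w \<subseteq> v}. C ^ (2 * card v) * \<eta> v * ?pk w)"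
    by (simp add: sum_distrib_right)
  also have "\<dots> = (\<Sum>v\<in>?P. \<Sum>w\<in>{w. w \<in> ?P \<and> w \<subseteq> v}. C ^ (2 * card v) * \<eta> v * ?pk w)"
    by (rule sum.swap_restrict) auto
  also have "\<dots> = (\<Sum>v\<in>?P. \<eta> v * (C ^ (2 * card v) * (\<Sum>w\<in>Pow v. ?pk w)))"
  proof (rule sum.cong[OF refl])
    fix v assume v: "v \<in> ?P"
    have "{w. w \<in> ?P \<and> w \<subseteq> v} = Pow v" using v by auto
    then show "(\<Sum>w\<in>{w. w \<in> ?P \<and> w \<subseteq> v}. C ^ (2 * card v) * \<eta> v * ?pk w) = \<eta> v * (C ^ (2 * card v) * (\<Sum>w\<in>Pow v. ?pk w))"
      by (simp add: sum_distrib_left algebra_simps)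
  qed
  also have "\<dots> = (\<Sum>u\<in>?P. \<eta> u * (C ^ (2 * card u) * (\<Prod>j\<in>u. 1 + m_up (x j) (y j))))"
  proof (rule sum.cong[OF refl])
    fix v assume v: "v \<in> ?P"
    then have fv: "finite v" using finite_subset by auto
    show "\<eta> v * (C ^ (2 * card v) * (\<Sum>w\<in>Pow v. ?pk w)) = \<eta> v * (C ^ (2 * card v) * (\<Prod>j\<in>v. 1 + m_up (x j) (y j)))"
      using prod_one_plus[OF fv, of "\<lambda>j. m_up (x j) (y j)"] by (simp add: prod_kernel_def)
  qed
  finally show ?thesis .
qed

theorem mainTheorem14:
  fixes D :: "'a set" and d :: nat
    and m m_up :: "'a \<Rightarrow> 'a \<Rightarrow> real"
    and C :: real and \<eta> :: "nat set \<Rightarrow> real"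
  assumes "D \<noteq> {}"
    and "reproducing_kernel D m" and "\<exists>x\<in>D. \<exists>y\<in>D. m x y \<noteq> 0"
    and "reproducing_kernel D m_up" and "\<exists>x\<in>D. \<exists>y\<in>D. m_up x y \<noteq> 0"
    and "rkhs D m \<subseteq> rkhs D (\<lambda>x y. 1 + m_up x y)"
    and "C > 0"
    and "\<forall>f\<in>rkhs D m. rkhs_norm D m f \<le> 1 \<longrightarrow> rkhs_norm D (\<lambda>x y. 1 + m_up x y) f \<le> C"
    and "\<eta> \<in> S_set d C"
  shows "rkhs (cube D d) (weighted_kernel d \<eta> m)
           \<subseteq> rkhs (cube D d) (weighted_kernel d (T_up d C \<eta>) m_up)
       \<and> (\<forall>f\<in>rkhs (cube D d) (weighted_kernel d \<eta> m).
            rkhs_norm (cube D d) (weighted_kernel d (T_up d C \<eta>) m_up) f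
              \<le> rkhs_norm (cube D d) (weighted_kernel d \<eta> m) f)"
proof -
  obtain Vm ipm where Rm: "is_rkhs D m Vm ipm" using rk_exists[OF assms(2)] by blast
  obtain Vu ipu where Ru: "is_rkhs D m_up Vu ipu" using rk_exists[OF assms(4)] by blast
  have pm: "pdk D m" using R_pdk[OF Rm] .
  have pu: "pdk D m_up" using R_pdk[OF Ru] .
  define k1 where "k1 = (\<lambda>x y. 1 + m_up x y)"
  have pk1: "pdk D k1" unfolding k1_def by (rule pdk_add[OF pdk_one pu])
  have R1: "is_rkhs D k1 (MAV D k1) (MAip D k1)" by (rule MA_rkhs[OF pk1])
  have eqm: "rkhs D m = Vm" using rkhs_char(1)[OF Rm] .
  have eq1: "rkhs D k1 = MAV D k1" using rkhs_char(1)[OF R1] .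
  have sub: "Vm \<subseteq> MAV D k1" using assms(6) eqm eq1 unfolding k1_def by simp
  have bnd: "\<forall>f\<in>Vm. sqrt (ipm f f) \<le> 1 \<longrightarrow> sqrt (MAip D k1 f f) \<le> C"
  proof (intro ballI impI)
    fix f assume f: "f \<in> Vm" and n: "sqrt (ipm f f) \<le> 1"
    have fk: "f \<in> MAV D k1" using f sub by blast
    have "rkhs_norm D m f \<le> 1" using rkhs_char(2)[OF Rm f] n by simp
    then have "rkhs_norm D k1 f \<le> C" using assms(8) f eqm unfolding k1_def by simp
    then show "sqrt (MAip D k1 f f) \<le> C" using rkhs_char(2)[OF R1 fk] by simp
  qed
  have pdiff: "pdk D (\<lambda>x y. C\<^sup>2 * k1 x y - m x y)" by (rule embed_pdk[OF Rm R1 sub assms(7) bnd])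
  define Z where "Z = cube D d"
  define K1 where "K1 = weighted_kernel d \<eta> m"
  define K2 where "K2 = weighted_kernel d (T_up d C \<eta>) m_up"
  have eta: "\<eta> u \<ge> 0" if "u \<in> Pow {1..d}" for u
    using assms(9) that unfolding S_set_def weights_def by blast
  have pB: "pdk Z (\<lambda>x y. m (x j) (y j))" if "j \<in> {1..d}" for j
    unfolding Z_def using pdk_coord[OF pm that] .
  have pAB: "pdk Z (\<lambda>x y. C\<^sup>2 * k1 (x j) (y j) - m (x j) (y j))" if "j \<in> {1..d}" for j
    unfolding Z_def using pdk_coord[OF pdiff that] .
  have pu_prod: "pdk Z (\<lambda>x y. prod_kernel m u x y)" if u: "u \<in> Pow {1..d}" for u
  proof -
    have fu: "finite u" using u finite_subset by auto
    show ?thesis unfolding prod_kernel_def using pB u by (intro pdk_prod[OF fu]) auto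
  qed
  have pu_diff: "pdk Z (\<lambda>x y. C ^ (2 * card u) * (\<Prod>j\<in>u. k1 (x j) (y j)) - prod_kernel m u x y)"
    if u: "u \<in> Pow {1..d}" for u
  proof -
    have fu: "finite u" using u finite_subset by auto
    have "pdk Z (\<lambda>x y. (\<Prod>j\<in>u. C\<^sup>2 * k1 (x j) (y j)) - (\<Prod>j\<in>u. m (x j) (y j)))"
      using pB pAB u by (intro pdk_diff_prod[OF fu]) auto
    moreover have "(\<Prod>j\<in>u. C\<^sup>2 * k1 (x j) (y j)) = C ^ (2 * card u) * (\<Prod>j\<in>u. k1 (x j) (y j))" for x y
      by (simp add: prod.distrib power_mult)
    ultimately show ?thesis unfolding prod_kernel_def by simp
  qed
  have pK1: "pdk Z K1" unfolding K1_def weighted_kernel_def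
    using pu_prod eta by (intro pdk_sum pdk_scale) auto
  have pD: "pdk Z (\<lambda>x y. K2 x y - K1 x y)"
  proof -
    have "pdk Z (\<lambda>x y. \<Sum>u\<in>Pow {1..d}. \<eta> u * (C ^ (2 * card u) * (\<Prod>j\<in>u. k1 (x j) (y j)) - prod_kernel m u x y))"
      using pu_diff eta by (intro pdk_sum pdk_scale) auto
    moreover have "K2 x y - K1 x y = (\<Sum>u\<in>Pow {1..d}. \<eta> u * (C ^ (2 * card u) * (\<Prod>j\<in>u. k1 (x j) (y j)) - prod_kernel m u x y))" for x y
    proof -
      have e2: "K2 x y = (\<Sum>u\<in>Pow {1..d}. \<eta> u * (C ^ (2 * card u) * (\<Prod>j\<in>u. k1 (x j) (y j))))"
        unfolding K2_def k1_def by (rule kernel_identity)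
      have e1: "K1 x y = (\<Sum>u\<in>Pow {1..d}. \<eta> u * prod_kernel m u x y)"
        unfolding K1_def weighted_kernel_def ..
      show ?thesis unfolding e1 e2 by (simp add: sum_subtractf[symmetric] algebra_simps)
    qed
    ultimately show ?thesis by simp
  qed
  have pK2: "pdk Z K2"
  proof -
    have "pdk Z (\<lambda>x y. K1 x y + (K2 x y - K1 x y))" by (rule pdk_add[OF pK1 pD])
    then show ?thesis by simp
  qed
  have RK1: "is_rkhs Z K1 (MAV Z K1) (MAip Z K1)" by (rule MA_rkhs[OF pK1])
  have RK2: "is_rkhs Z K2 (MAV Z K2) (MAip Z K2)" by (rule MA_rkhs[OF pK2])
  have main: "f \<in> MAV Z K2 \<and> MAip Z K2 f f \<le> MAip Z K1 f f" if f: "f \<in> MAV Z K1" for f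
  proof -
    define c where "c = MAip Z K1 f f"
    have c0: "0 \<le> c" unfolding c_def using P_nonneg[OF R_preh[OF RK1] f] .
    have "pdk Z (\<lambda>x y. c * (K2 x y - K1 x y) + (c * K1 x y - f x * f y))"
      using pdk_add[OF pdk_scale[OF pD c0] R_E[OF RK1 f]] unfolding c_def .
    then have "pdk Z (\<lambda>x y. c * K2 x y - f x * f y)" by (simp add: algebra_simps)
    then show ?thesis unfolding c_def[symmetric]
      using R_H[OF RK2 c0 _ ] R_sub[OF RK1 f] by blast
  qed
  show ?thesis
    unfolding Z_def[symmetric] K1_def[symmetric] K2_def[symmetric]
    unfolding rkhs_char(1)[OF RK1] rkhs_char(1)[OF RK2]
  proof (intro conjI ballI subsetI)
    fix f assume "f \<in> MAV Z K1"
    then show "f \<in> MAV Z K2" using main by blast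
  next
    fix f assume f: "f \<in> MAV Z K1"
    have f2: "f \<in> MAV Z K2" using main f by blast
    show "rkhs_norm Z K2 f \<le> rkhs_norm Z K1 f"
      unfolding rkhs_char(2)[OF RK1 f] rkhs_char(2)[OF RK2 f2] using main[OF f] by simp
  qed
qed

end
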